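(* Let $k$ be an algebraically closed field of characteristic zero, $S=k[x_0,\dots,x_n]$, and let $X\subset\mathbb P^n$ be a projective variety which is a chain of closed subvarieties $X_1,\dots,X_\ell$, with saturated homogeneous ideal $I_X=\bigcap_{i=1}^\ell I_{X_i}$, where $I_{X_i}$ is the saturated homogeneous ideal of $X_i$. Suppose that there is a sequence of integers $n_0=0<n_1<\cdots<n_\ell=n$ such that for each $i$, \[ X_i\subset\{x_0=\cdots=x_{n_{i-1}-1}=0,\ x_{n_i+1}=\cdots=x_n=0\}. \] For $i=1,\dots,\ell-1$ let $T_i=\langle x_{n_{i-1}},\dots,x_{n_i-1}\rangle\cdot\langle x_{n_i+1},\dots,x_n\rangle\subset S$, let $T=\sum_{i=1}^{\ell-1}T_i$, and for a positive integer $m$ let $\tau=\sum_{x^\alpha\in T_m}\alpha\in\mathbb Z^{n+1}$, the sum running over all degree $m$ monomials of $T$. Then, for every positive integer $m$ (at least the Castelnuovo–Mumford regularity of the ideals involved), \[ \mathcal P_m(I_X)=\tau+\sum_{i=1}^{\ell}\mathcal P_m\big(I_{X_i}\cap k[x_{n_{i-1}},\dots,x_{n_i}]\big), \] where the sum is the Minkowski sum of polytopes in $\mathbb R^{n+1}$.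
   Context: A chain of subvarieties means $X=\bigcup_{i=1}^\ell X_i$ and $X_i\cap X_j\neq\emptyset$ if and only if $|i-j|=1$. For a homogeneous ideal $J$ in a polynomial ring $k[x_a,\dots,x_b]$ ($0\le a\le b\le n$) and a positive integer $m$, the $m$th state polytope is $\mathcal P_m(J)=\mathrm{Conv}\{\sum_{x^\alpha\in \mathrm{in}_\prec(J)_m}\alpha \mid \prec \text{ a monomial order on } k[x_a,\dots,x_b]\}$, where $\mathrm{in}_\prec(J)_m$ is the set of degree $m$ monomials in the initial ideal of $J$ and the exponent vectors $\alpha$ are regarded as vectors in $\mathbb R^{n+1}$ whose coordinates with index outside $[a,b]$ are zero. (The paper uses this for $m\ge \mathrm{reg}(J)$, the Castelnuovo–Mumford regularity.) *)

theory Defs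
  imports "HOL-Library.Poly_Mapping" "HOL-Computational_Algebra.Polynomial"
begin

text \<open>Multivariate polynomials in variables x_0, x_1, ... over 'a: finitely supported maps
  from monomials (exponent vectors) to coefficients (convolution product).\<close>
type_synonym 'a mpoly = "(nat \<Rightarrow>\<^sub>0 nat) \<Rightarrow>\<^sub>0 'a"

definition mdeg :: "(nat \<Rightarrow>\<^sub>0 nat) \<Rightarrow> nat" where
  "mdeg \<alpha> = (\<Sum>j\<in>Poly_Mapping.keys \<alpha>. Poly_Mapping.lookup \<alpha> j)"

definition mdvd :: "(nat \<Rightarrow>\<^sub>0 nat) \<Rightarrow> (nat \<Rightarrow>\<^sub>0 nat) \<Rightarrow> bool" where
  "mdvd \<alpha> \<beta> \<longleftrightarrow> (\<forall>j. Poly_Mapping.lookup \<alpha> j \<le> Poly_Mapping.lookup \<beta> j)"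

definition ring_in :: "nat set \<Rightarrow> ('a::comm_ring_1) mpoly set" where
  "ring_in V = {f. \<forall>\<alpha>\<in>Poly_Mapping.keys f. Poly_Mapping.keys \<alpha> \<subseteq> V}"

definition homog :: "('a::comm_ring_1) mpoly \<Rightarrow> nat \<Rightarrow> bool" where
  "homog f d \<longleftrightarrow> (\<forall>\<alpha>\<in>Poly_Mapping.keys f. mdeg \<alpha> = d)"

definition homog_int :: "('a::comm_ring_1) mpoly \<Rightarrow> int \<Rightarrow> bool" where
  "homog_int f d \<longleftrightarrow> f = 0 \<or> (d \<ge> 0 \<and> homog f (nat d))"

definition eval :: "('a::comm_ring_1) mpoly \<Rightarrow> (nat \<Rightarrow> 'a) \<Rightarrow> 'a" where
  "eval f p = (\<Sum>\<alpha>\<in>Poly_Mapping.keys f. Poly_Mapping.lookup f \<alpha> * (\<Prod>j\<in>Poly_Mapping.keys \<alpha>. p j ^ Poly_Mapping.lookup \<alpha> j))"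

definition aff :: "nat \<Rightarrow> (nat \<Rightarrow> 'a::zero) set" where
  "aff n = {p. \<forall>j>n. p j = 0}"

text \<open>A closed subset X of P^n, represented by its affine cone in k^{n+1}: the common
  zero locus of a set of homogeneous polynomials of S = k[x_0..x_n].\<close>
definition proj_closed :: "nat \<Rightarrow> (nat \<Rightarrow> 'a::comm_ring_1) set \<Rightarrow> bool" where
  "proj_closed n X \<longleftrightarrow> (\<exists>F. F \<subseteq> ring_in {0..n} \<and> (\<forall>f\<in>F. \<exists>d. homog f d) \<and>
      X = {p\<in>aff n. \<forall>f\<in>F. eval f p = 0})"

text \<open>The saturated homogeneous ideal I_X \<subseteq> S of the projective set with cone X:
  all polynomials of S vanishing at every point of X (i.e. every nonzero point of the cone).\<close>
definition ideal_of :: "nat \<Rightarrow> (nat \<Rightarrow> 'a::comm_ring_1) set \<Rightarrow> 'a mpoly set" where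
  "ideal_of n X = {f\<in>ring_in {0..n}. \<forall>p\<in>X. p \<noteq> (\<lambda>_. 0) \<longrightarrow> eval f p = 0}"

definition mat_apply :: "(nat \<Rightarrow> nat \<Rightarrow> ('a::comm_ring_1) mpoly) \<Rightarrow> nat \<Rightarrow> nat \<Rightarrow> 'a mpoly list \<Rightarrow> 'a mpoly list" where
  "mat_apply M rows cols v = map (\<lambda>r. \<Sum>c<cols. M r c * v ! c) [0..<rows]"

definition vecs_in :: "nat set \<Rightarrow> nat \<Rightarrow> ('a::comm_ring_1) mpoly list set" where
  "vecs_in V r = {v. length v = r \<and> set v \<subseteq> ring_in V}"

text \<open>A finite graded free resolution of the homogeneous ideal I of k[x_j : j \<in> V]:
  0 \<rightarrow> F_p \<rightarrow> ... \<rightarrow> F_1 \<rightarrow> F_0 \<rightarrow> I \<rightarrow> 0 with F_i = direct sum over c of S(-degs i ! c);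
  F_0 \<rightarrow> I sends the basis vectors to the homogeneous generators gens, F_i \<rightarrow> F_{i-1} is given
  by the matrix M i (entry (r,c) homogeneous of degree degs i ! c - degs (i-1) ! r).
  reg(I) \<le> m iff there is such a resolution with degs i ! c - i \<le> m for all i, c
  (the minimal resolution is a direct summand of any graded free resolution).\<close>
definition graded_resolution ::
  "nat set \<Rightarrow> ('a::comm_ring_1) mpoly set \<Rightarrow> nat \<Rightarrow> (nat \<Rightarrow> nat list) \<Rightarrow> 'a mpoly list
     \<Rightarrow> (nat \<Rightarrow> nat \<Rightarrow> nat \<Rightarrow> 'a mpoly) \<Rightarrow> bool" where
  "graded_resolution V I p degs gens M \<longleftrightarrow>
     length gens = length (degs 0) \<and> set gens \<subseteq> ring_in V \<and>
     (\<forall>j<length gens. homog (gens ! j) (degs 0 ! j)) \<and>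
     I = {(\<Sum>j<length gens. a ! j * gens ! j) | a. a \<in> vecs_in V (length gens)} \<and>
     (\<forall>i\<in>{1..p}. \<forall>r<length (degs (i - 1)). \<forall>c<length (degs i).
         M i r c \<in> ring_in V \<and> homog_int (M i r c) (int (degs i ! c) - int (degs (i - 1) ! r))) \<and>
     {a \<in> vecs_in V (length gens). (\<Sum>j<length gens. a ! j * gens ! j) = 0} =
       (if p = 0 then {replicate (length gens) 0}
        else mat_apply (M 1) (length (degs 0)) (length (degs 1)) ` vecs_in V (length (degs 1))) \<and>
     (\<forall>i\<in>{1..p}. {v \<in> vecs_in V (length (degs i)).
          mat_apply (M i) (length (degs (i - 1))) (length (degs i)) v = replicate (length (degs (i - 1))) 0} =
       (if i = p then {replicate (length (degs i)) 0}
        else mat_apply (M (Suc i)) (length (degs i)) (length (degs (Suc i))) ` vecs_in V (length (degs (Suc i)))))"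

definition reg_le :: "nat set \<Rightarrow> ('a::comm_ring_1) mpoly set \<Rightarrow> int \<Rightarrow> bool" where
  "reg_le V I m \<longleftrightarrow> (\<exists>p degs gens M. graded_resolution V I p degs gens M \<and>
      (\<forall>i\<le>p. \<forall>c<length (degs i). int (degs i ! c) - int i \<le> m))"

definition mono_order :: "nat set \<Rightarrow> ((nat \<Rightarrow>\<^sub>0 nat) \<Rightarrow> (nat \<Rightarrow>\<^sub>0 nat) \<Rightarrow> bool) \<Rightarrow> bool" where
  "mono_order V ord \<longleftrightarrow> (let M = {\<alpha>. Poly_Mapping.keys \<alpha> \<subseteq> V} in
     (\<forall>\<alpha>\<in>M. ord \<alpha> \<alpha>) \<and>
     (\<forall>\<alpha>\<in>M. \<forall>\<beta>\<in>M. ord \<alpha> \<beta> \<and> ord \<beta> \<alpha> \<longrightarrow> \<alpha> = \<beta>) \<and>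
     (\<forall>\<alpha>\<in>M. \<forall>\<beta>\<in>M. \<forall>\<gamma>\<in>M. ord \<alpha> \<beta> \<and> ord \<beta> \<gamma> \<longrightarrow> ord \<alpha> \<gamma>) \<and>
     (\<forall>\<alpha>\<in>M. \<forall>\<beta>\<in>M. ord \<alpha> \<beta> \<or> ord \<beta> \<alpha>) \<and>
     (\<forall>\<alpha>\<in>M. \<forall>\<beta>\<in>M. \<forall>\<gamma>\<in>M. ord \<alpha> \<beta> \<longrightarrow> ord (\<alpha> + \<gamma>) (\<beta> + \<gamma>)) \<and>
     (\<forall>A\<subseteq>M. A \<noteq> {} \<longrightarrow> (\<exists>\<alpha>\<in>A. \<forall>\<beta>\<in>A. ord \<alpha> \<beta>)))"

definition lm :: "((nat \<Rightarrow>\<^sub>0 nat) \<Rightarrow> (nat \<Rightarrow>\<^sub>0 nat) \<Rightarrow> bool) \<Rightarrow> ('a::zero) mpoly \<Rightarrow> nat \<Rightarrow>\<^sub>0 nat" where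
  "lm ord f = (THE \<alpha>. \<alpha> \<in> Poly_Mapping.keys f \<and> (\<forall>\<beta>\<in>Poly_Mapping.keys f. ord \<beta> \<alpha>))"

text \<open>exponents of the degree-m monomials of in_ord(J), J an ideal of k[x_j : j \<in> V]:
  in_ord(J) is generated by the leading monomials of the nonzero elements of J\<close>
definition init_deg :: "nat set \<Rightarrow> ((nat \<Rightarrow>\<^sub>0 nat) \<Rightarrow> (nat \<Rightarrow>\<^sub>0 nat) \<Rightarrow> bool) \<Rightarrow> ('a::zero) mpoly set
     \<Rightarrow> nat \<Rightarrow> (nat \<Rightarrow>\<^sub>0 nat) set" where
  "init_deg V ord J m = {\<beta>. Poly_Mapping.keys \<beta> \<subseteq> V \<and> mdeg \<beta> = m \<and> (\<exists>f\<in>J. f \<noteq> 0 \<and> mdvd (lm ord f) \<beta>)}"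

definition vecsum :: "(nat \<Rightarrow>\<^sub>0 nat) set \<Rightarrow> nat \<Rightarrow> real" where
  "vecsum A = (\<lambda>j. real (\<Sum>\<alpha>\<in>A. Poly_Mapping.lookup \<alpha> j))"

definition conv :: "(nat \<Rightarrow> real) set \<Rightarrow> (nat \<Rightarrow> real) set" where
  "conv P = {x. \<exists>F u. finite F \<and> F \<noteq> {} \<and> F \<subseteq> P \<and> (\<forall>y\<in>F. u y \<ge> 0) \<and> (\<Sum>y\<in>F. u y) = 1 \<and>
                  x = (\<lambda>j. \<Sum>y\<in>F. u y * y j)}"

definition state_polytope :: "nat set \<Rightarrow> ('a::zero) mpoly set \<Rightarrow> nat \<Rightarrow> (nat \<Rightarrow> real) set" where
  "state_polytope V J m = conv {vecsum (init_deg V ord J m) | ord. mono_order V ord}"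

definition msum :: "nat set \<Rightarrow> (nat \<Rightarrow> (nat \<Rightarrow> real) set) \<Rightarrow> (nat \<Rightarrow> real) set" where
  "msum I P = {x. \<exists>y. (\<forall>i\<in>I. y i \<in> P i) \<and> x = (\<lambda>j. \<Sum>i\<in>I. y i j)}"

text \<open>exponents of the degree-m monomials of T = \<Sum>_{i=1}^{l-1} <x_{n_{i-1}},...,x_{n_i - 1}> * <x_{n_i+1},...,x_n>
  (a monomial ideal: x^\<alpha> \<in> T iff x_j x_j' | x^\<alpha> for some such i, j, j')\<close>
definition T_deg :: "nat \<Rightarrow> nat \<Rightarrow> (nat \<Rightarrow> nat) \<Rightarrow> nat \<Rightarrow> (nat \<Rightarrow>\<^sub>0 nat) set" where
  "T_deg n l ns m = {\<alpha>. Poly_Mapping.keys \<alpha> \<subseteq> {0..n} \<and> mdeg \<alpha> = m \<and>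
     (\<exists>i\<in>{1..l-1}. \<exists>j\<in>{ns (i-1)..<ns i}. \<exists>j'\<in>{ns i + 1..n}. Poly_Mapping.lookup \<alpha> j \<ge> 1 \<and> Poly_Mapping.lookup \<alpha> j' \<ge> 1)}"

end

theory Submission
  imports Defs "HOL-Library.FuncSet"
begin

abbreviation pk :: "(nat \<Rightarrow>\<^sub>0 nat) \<Rightarrow> nat set" where "pk \<equiv> Poly_Mapping.keys"

abbreviation lk :: "(nat \<Rightarrow>\<^sub>0 nat) \<Rightarrow> nat \<Rightarrow> nat" where "lk \<equiv> Poly_Mapping.lookup"
abbreviation fk :: "('a::zero) mpoly \<Rightarrow> (nat \<Rightarrow>\<^sub>0 nat) set" where "fk \<equiv> Poly_Mapping.keys"

lemma finite_min_rel:
  assumes "finite S" "S \<noteq> {}" "\<forall>x\<in>S. \<forall>y\<in>S. R x y \<or> R y x"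
    "\<forall>x\<in>S. \<forall>y\<in>S. \<forall>z\<in>S. R x y \<and> R y z \<longrightarrow> R x z"
  shows "\<exists>x\<in>S. \<forall>y\<in>S. R x y"
  using assms
proof (induction S rule: finite_ne_induct)
  case (singleton x) then show ?case by blast
next
  case (insert x F)
  have p1: "\<forall>x\<in>F. \<forall>y\<in>F. R x y \<or> R y x" using insert.prems(1) by blast
  have p2: "\<forall>x\<in>F. \<forall>y\<in>F. \<forall>z\<in>F. R x y \<and> R y z \<longrightarrow> R x z" using insert.prems(2) by blast
  obtain y where y: "y\<in>F" "\<forall>z\<in>F. R y z" using insert.IH[OF p1 p2] by blast
  show ?case
  proof (cases "R x y")
    case True
    have "\<forall>z\<in>insert x F. R x z"
    proof
      fix z assume "z \<in> insert x F"
      then show "R x z"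
      proof
        assume "z = x" then show ?thesis using insert.prems(1) by blast
      next
        assume z: "z \<in> F"
        have "R y z" using y z by blast
        then show ?thesis using True y(1) z insert.prems(2) by blast
      qed
    qed
    then show ?thesis by blast
  next
    case False
    then have "R y x" using insert.prems(1) y(1) by blast
    then have "\<forall>z\<in>insert x F. R y z" using y by blast
    then show ?thesis using y(1) by blast
  qed
qed
lemma mono_order_iff:
  "mono_order V ord \<longleftrightarrow>
     (\<forall>a. pk a \<subseteq> V \<longrightarrow> ord a a) \<and>
     (\<forall>a b. pk a \<subseteq> V \<longrightarrow> pk b \<subseteq> V \<longrightarrow> ord a b \<longrightarrow> ord b a \<longrightarrow> a = b) \<and>
     (\<forall>a b c. pk a \<subseteq> V \<longrightarrow> pk b \<subseteq> V \<longrightarrow> pk c \<subseteq> V \<longrightarrow> ord a b \<longrightarrow> ord b c \<longrightarrow> ord a c) \<and>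
     (\<forall>a b. pk a \<subseteq> V \<longrightarrow> pk b \<subseteq> V \<longrightarrow> ord a b \<or> ord b a) \<and>
     (\<forall>a b c. pk a \<subseteq> V \<longrightarrow> pk b \<subseteq> V \<longrightarrow> pk c \<subseteq> V \<longrightarrow> ord a b \<longrightarrow> ord (a + c) (b + c)) \<and>
     (\<forall>A. A \<subseteq> {a. pk a \<subseteq> V} \<longrightarrow> A \<noteq> {} \<longrightarrow> (\<exists>a\<in>A. \<forall>b\<in>A. ord a b))"
  unfolding mono_order_def Let_def Ball_def mem_Collect_eq by (simp add: imp_conjL)

lemma mono_order_D:
  assumes "mono_order V ord"
  shows "pk a \<subseteq> V \<Longrightarrow> ord a a"
    and "pk a \<subseteq> V \<Longrightarrow> pk b \<subseteq> V \<Longrightarrow> ord a b \<Longrightarrow> ord b a \<Longrightarrow> a = b"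
    and "pk a \<subseteq> V \<Longrightarrow> pk b \<subseteq> V \<Longrightarrow> pk c \<subseteq> V \<Longrightarrow> ord a b \<Longrightarrow> ord b c \<Longrightarrow> ord a c"
    and "pk a \<subseteq> V \<Longrightarrow> pk b \<subseteq> V \<Longrightarrow> ord a b \<or> ord b a"
    and "pk a \<subseteq> V \<Longrightarrow> pk b \<subseteq> V \<Longrightarrow> pk c \<subseteq> V \<Longrightarrow> ord a b \<Longrightarrow> ord (a + c) (b + c)"
    and "A \<subseteq> {a. pk a \<subseteq> V} \<Longrightarrow> A \<noteq> {} \<Longrightarrow> \<exists>a\<in>A. \<forall>b\<in>A. ord a b"
  using assms unfolding mono_order_iff by metis+

lemma mono_order_mono:
  assumes mo: "mono_order V ord" and W: "W \<subseteq> V"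
  shows "mono_order W ord"
  unfolding mono_order_iff
proof (intro conjI allI impI)
  fix A assume "A \<subseteq> {a. pk a \<subseteq> W}" "A \<noteq> {}"
  moreover have "{a. pk a \<subseteq> W} \<subseteq> {a. pk a \<subseteq> V}" using W by auto
  ultimately show "\<exists>a\<in>A. \<forall>b\<in>A. ord a b" using mono_order_D(6)[OF mo] by (meson subset_trans)
qed (use mono_order_D[OF mo] W in \<open>meson subset_trans\<close>)+

lemma lm_props:
  assumes mo: "mono_order V ord" and f: "f \<noteq> 0" and kv: "\<forall>a\<in>fk f. pk a \<subseteq> V"
  shows "lm ord f \<in> fk f \<and> (\<forall>b\<in>fk f. ord b (lm ord f))"
proof -
  have "fk f \<noteq> {}" using f by (metis (no_types) Poly_Mapping.keys_eq_empty)
  then obtain a where a: "a \<in> fk f" "\<forall>b\<in>fk f. ord b a"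
  proof -
    have "\<exists>x\<in>fk f. \<forall>y\<in>fk f. ord y x"
    proof (rule finite_min_rel[of "fk f" "\<lambda>x y. ord y x"])
      show "\<forall>x\<in>fk f. \<forall>y\<in>fk f. ord y x \<or> ord x y" using mono_order_D(4)[OF mo] kv by blast
      show "\<forall>x\<in>fk f. \<forall>y\<in>fk f. \<forall>z\<in>fk f. ord y x \<and> ord z y \<longrightarrow> ord z x"
        using mono_order_D(3)[OF mo] kv by blast
    qed (use \<open>fk f \<noteq> {}\<close> in auto)
    then show ?thesis using that by blast
  qed
  have "lm ord f = a"
    unfolding lm_def
  proof (rule the_equality)
    show "a \<in> fk f \<and> (\<forall>b\<in>fk f. ord b a)" using a by auto
  next
    fix x assume "x \<in> fk f \<and> (\<forall>b\<in>fk f. ord b x)"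
    then show "x = a" using a mono_order_D(2)[OF mo] kv by blast
  qed
  then show ?thesis using a by simp
qed

lemma lm_eqI:
  assumes mo: "mono_order V ord" and kv: "\<forall>a\<in>fk f. pk a \<subseteq> V"
    and a: "a \<in> fk f" "\<forall>b\<in>fk f. ord b a"
  shows "lm ord f = a"
  unfolding lm_def
proof (rule the_equality)
  show "a \<in> fk f \<and> (\<forall>b\<in>fk f. ord b a)" using a by auto
next
  fix x assume "x \<in> fk f \<and> (\<forall>b\<in>fk f. ord b x)"
  then show "x = a" using a mono_order_D(2)[OF mo] kv by blast
qed

lemma lm_cong:
  assumes "\<forall>a\<in>fk f. \<forall>b\<in>fk f. ord a b = ord' a b"
  shows "lm ord f = lm ord' f"
  unfolding lm_def using assms by (intro arg_cong[where f=The] ext) auto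


definition mon :: "(nat \<Rightarrow>\<^sub>0 nat) \<Rightarrow> (nat \<Rightarrow> 'a::comm_ring_1) \<Rightarrow> 'a" where
  "mon a p = (\<Prod>j\<in>pk a. p j ^ lk a j)"

lemma eval_mon: "eval f p = (\<Sum>a\<in>fk f. Poly_Mapping.lookup f a * mon a p)"
  unfolding eval_def mon_def by simp

lemma mon_zero: assumes "j \<in> pk a" "p j = 0" shows "mon a p = 0"
proof -
  have "lk a j \<noteq> 0" using assms(1) by (simp add: in_keys_iff)
  then have "p j ^ lk a j = 0" using assms(2) by (simp add: power_0_left)
  then show ?thesis unfolding mon_def using assms(1) by (meson finite_keys prod_zero)
qed

lemma eval_zero_if: assumes "\<forall>a\<in>fk f. \<exists>j\<in>pk a. p j = 0" shows "eval f p = 0"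
  unfolding eval_mon using assms mon_zero by (metis (no_types, lifting) mult_zero_right sum.neutral)

definition restr :: "('a::zero) mpoly \<Rightarrow> ((nat \<Rightarrow>\<^sub>0 nat) \<Rightarrow> bool) \<Rightarrow> 'a mpoly" where
  "restr f P = Abs_poly_mapping (\<lambda>a. if P a then Poly_Mapping.lookup f a else 0)"

lemma lookup_restr: "Poly_Mapping.lookup (restr f P) = (\<lambda>a. if P a then Poly_Mapping.lookup f a else 0)"
proof -
  have "finite {a. (if P a then Poly_Mapping.lookup f a else 0) \<noteq> 0}"
    by (rule finite_subset[OF _ finite_lookup[of f]]) (auto split: if_splits)
  then show ?thesis unfolding restr_def by simp
qed

lemma keys_restr: "fk (restr f P) = {a \<in> fk f. P a}"
  by (auto simp: in_keys_iff lookup_restr split: if_splits)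

lemma eval_restr: "eval (restr f P) p = (\<Sum>a\<in>{a \<in> fk f. P a}. Poly_Mapping.lookup f a * mon a p)"
  unfolding eval_mon keys_restr by (intro sum.cong) (auto simp: lookup_restr)

lemma mon_scale: "mon a (\<lambda>j. t * p j) = t ^ mdeg a * mon a p"
  unfolding mon_def mdeg_def power_mult_distrib prod.distrib power_sum by simp

lemma eval_scale: "eval f (\<lambda>j. t * p j) = (\<Sum>a\<in>fk f. (Poly_Mapping.lookup f a * mon a p) * t ^ mdeg a)"
  unfolding eval_mon mon_scale by (intro sum.cong) (auto simp: ac_simps)

lemma eval_scale_homog: assumes "homog f d" shows "eval f (\<lambda>j. t * p j) = t ^ d * eval f p"
proof -
  have "eval f (\<lambda>j. t * p j) = (\<Sum>a\<in>fk f. (Poly_Mapping.lookup f a * mon a p) * t ^ d)"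
    unfolding eval_scale using assms unfolding homog_def by (intro sum.cong) auto
  also have "\<dots> = t ^ d * eval f p" unfolding eval_mon sum_distrib_left by (simp add: ac_simps)
  finally show ?thesis .
qed

lemma cone: assumes "proj_closed n X" "p \<in> X" shows "(\<lambda>j. t * p j) \<in> X"
proof -
  obtain F where F: "\<forall>f\<in>F. \<exists>d. homog f d" "X = {p\<in>aff n. \<forall>f\<in>F. eval f p = 0}"
    using assms(1) unfolding proj_closed_def by blast
  have p: "p \<in> aff n" "\<forall>f\<in>F. eval f p = 0" using assms(2) F(2) by auto
  have "(\<lambda>j. t * p j) \<in> aff n" using p(1) unfolding aff_def by auto
  moreover have "\<forall>f\<in>F. eval f (\<lambda>j. t * p j) = 0"
  proof
    fix f assume "f \<in> F"
    then obtain d where hd: "homog f d" using F(1) by blast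
    have "eval f p = 0" using p(2) \<open>f\<in>F\<close> by blast
    then show "eval f (\<lambda>j. t * p j) = 0" using eval_scale_homog[OF hd] by simp
  qed
  ultimately show ?thesis using F(2) by blast
qed

lemma poly_zero_coeffs:
  fixes c :: "'b \<Rightarrow> 'a::field_char_0"
  assumes A: "finite A" and z: "\<forall>t. t \<noteq> 0 \<longrightarrow> (\<Sum>a\<in>A. c a * t ^ e a) = 0"
  shows "(\<Sum>a\<in>A. if e a = d then c a else 0) = 0"
proof -
  define Q where "Q = (\<Sum>a\<in>A. monom (c a) (e a))"
  have pQ: "poly Q t = (\<Sum>a\<in>A. c a * t ^ e a)" for t
    unfolding Q_def poly_sum poly_monom by simp
  have "Q = 0"
  proof (rule ccontr)
    assume "Q \<noteq> 0"
    then have fin: "finite {t. poly Q t = 0}" by (rule poly_roots_finite)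
    have "(UNIV::'a set) \<subseteq> insert 0 {t. poly Q t = 0}" using z pQ by auto
    then have "finite (UNIV::'a set)" using fin by (meson finite_insert finite_subset)
    then show False using infinite_UNIV_char_0 by blast
  qed
  then have "coeff Q d = 0" by simp
  then show ?thesis unfolding Q_def coeff_sum coeff_monom by simp
qed

lemma ideal_ofD: "f \<in> ideal_of n X \<Longrightarrow> p \<in> X \<Longrightarrow> p \<noteq> (\<lambda>_. 0) \<Longrightarrow> eval f p = 0"
  unfolding ideal_of_def by blast

lemma no_pure_keys:
  fixes X :: "(nat \<Rightarrow> 'a::field_char_0) set"
  assumes pc: "proj_closed n X" and h: "h \<in> ideal_of n X" and r: "r \<in> X" "r \<noteq> (\<lambda>_. 0)"
    and rs: "\<forall>j. j \<noteq> s \<longrightarrow> r j = 0"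
  shows "\<forall>a\<in>fk h. \<not> pk a \<subseteq> {s}"
proof (rule ccontr)
  assume "\<not> (\<forall>a\<in>fk h. \<not> pk a \<subseteq> {s})"
  then obtain a0 where a0: "a0 \<in> fk h" "pk a0 \<subseteq> {s}" by blast
  define A where "A = {a\<in>fk h. pk a \<subseteq> {s}}"
  have rs0: "r s \<noteq> 0" using r(2) rs by (metis ext)
  have key: "(\<Sum>a\<in>A. Poly_Mapping.lookup h a * t ^ lk a s) = 0" if t: "t \<noteq> 0" for t
  proof -
    define q where "q = (\<lambda>j. (t / r s) * r j)"
    have qX: "q \<in> X" unfolding q_def by (rule cone[OF pc r(1)])
    have qs: "q s = t" unfolding q_def using rs0 by simp
    have q0: "q \<noteq> (\<lambda>_. 0)" using qs t by (metis)
    have qj: "q j = 0" if "j \<noteq> s" for j unfolding q_def using rs that by simp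
    have "eval h q = 0" using ideal_ofD[OF h qX q0] .
    moreover have "eval h q = (\<Sum>a\<in>A. Poly_Mapping.lookup h a * mon a q)"
      unfolding eval_mon A_def
    proof (rule sum.mono_neutral_right)
      show "\<forall>i\<in>fk h - {a \<in> fk h. pk a \<subseteq> {s}}. Poly_Mapping.lookup h i * mon i q = 0"
      proof
        fix a assume "a \<in> fk h - {a \<in> fk h. pk a \<subseteq> {s}}"
        then obtain j where "j \<in> pk a" "j \<noteq> s" by blast
        then show "Poly_Mapping.lookup h a * mon a q = 0" using mon_zero[of j a q] qj[of j] by simp
      qed
    qed auto
    moreover have "mon a q = t ^ lk a s" if "a \<in> A" for a
    proof (cases "s \<in> pk a")
      case True
      then have "pk a = {s}" using that unfolding A_def by blast
      then show ?thesis unfolding mon_def using qs by simp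
    next
      case False
      then have "pk a = {}" using that unfolding A_def by blast
      moreover have "lk a s = 0" using False by (simp add: in_keys_iff)
      ultimately show ?thesis unfolding mon_def by simp
    qed
    ultimately show ?thesis by simp
  qed
  have "(\<Sum>a\<in>A. if lk a s = lk a0 s then Poly_Mapping.lookup h a else 0) = 0"
    by (rule poly_zero_coeffs[where e="\<lambda>a. lk a s"]) (use key in \<open>auto simp: A_def\<close>)
  moreover have "(\<Sum>a\<in>A. if lk a s = lk a0 s then Poly_Mapping.lookup h a else 0) = Poly_Mapping.lookup h a0"
  proof -
    have "(\<Sum>a\<in>A. if lk a s = lk a0 s then Poly_Mapping.lookup h a else 0)
        = (\<Sum>a\<in>A. if a = a0 then Poly_Mapping.lookup h a else 0)"
    proof (rule sum.cong)
      fix a assume a: "a \<in> A"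
      have "lk a s = lk a0 s \<longleftrightarrow> a = a0"
      proof
        assume eq: "lk a s = lk a0 s"
        show "a = a0"
        proof (rule poly_mapping_eqI)
          fix j show "lk a j = lk a0 j"
          proof (cases "j = s")
            case True then show ?thesis using eq by simp
          next
            case False
            then have "j \<notin> pk a" "j \<notin> pk a0" using a a0 unfolding A_def by blast+
            then show ?thesis by (simp add: in_keys_iff)
          qed
        qed
      qed simp
      then show "(if lk a s = lk a0 s then Poly_Mapping.lookup h a else 0) = (if a = a0 then Poly_Mapping.lookup h a else 0)"
        by simp
    qed simp
    also have "\<dots> = Poly_Mapping.lookup h a0" using a0 by (simp add: A_def)
    finally show ?thesis .
  qed
  ultimately show False using a0(1) by (simp add: in_keys_iff)
qed

definition hcomp :: "('a::zero) mpoly \<Rightarrow> nat \<Rightarrow> 'a mpoly" where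
  "hcomp f d = restr f (\<lambda>a. mdeg a = d)"

lemma ideal_hcomp:
  fixes X :: "(nat \<Rightarrow> 'a::field_char_0) set"
  assumes pc: "proj_closed n X" and f: "f \<in> ideal_of n X"
  shows "hcomp f d \<in> ideal_of n X"
proof -
  have ring: "f \<in> ring_in {0..n}" using f unfolding ideal_of_def by blast
  have "hcomp f d \<in> ring_in {0..n}" using ring unfolding ring_in_def hcomp_def mem_Collect_eq keys_restr by blast
  moreover have "eval (hcomp f d) p = 0" if p: "p \<in> X" "p \<noteq> (\<lambda>_. 0)" for p
  proof -
    have z: "\<forall>t. t \<noteq> 0 \<longrightarrow> (\<Sum>a\<in>fk f. (Poly_Mapping.lookup f a * mon a p) * t ^ mdeg a) = 0"
    proof (intro allI impI)
      fix t :: 'a assume t: "t \<noteq> 0"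
      have "(\<lambda>j. t * p j) \<in> X" by (rule cone[OF pc p(1)])
      moreover have "(\<lambda>j. t * p j) \<noteq> (\<lambda>_. 0)"
      proof
        assume "(\<lambda>j. t * p j) = (\<lambda>_. 0)"
        then have "\<forall>j. p j = 0" using t by (metis mult_eq_0_iff)
        then show False using p(2) by auto
      qed
      ultimately have "eval f (\<lambda>j. t * p j) = 0" using ideal_ofD[OF f] by blast
      then show "(\<Sum>a\<in>fk f. (Poly_Mapping.lookup f a * mon a p) * t ^ mdeg a) = 0"
        unfolding eval_scale .
    qed
    have "(\<Sum>a\<in>fk f. if mdeg a = d then Poly_Mapping.lookup f a * mon a p else 0) = 0"
      by (rule poly_zero_coeffs[OF finite_keys z])
    moreover have "eval (hcomp f d) p = (\<Sum>a\<in>fk f. if mdeg a = d then Poly_Mapping.lookup f a * mon a p else 0)"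
      unfolding hcomp_def eval_restr by (simp add: sum.inter_filter)
    ultimately show ?thesis by simp
  qed
  ultimately show ?thesis unfolding ideal_of_def by blast
qed


lemma lk_le_mdeg: "lk b j \<le> mdeg b"
proof (cases "j \<in> pk b")
  case True then show ?thesis unfolding mdeg_def by (intro member_le_sum) auto
next
  case False then show ?thesis by (simp add: in_keys_iff)
qed

lemma mdeg_zero_iff: "mdeg b = 0 \<longleftrightarrow> pk b = {}"
proof
  assume "mdeg b = 0"
  then have "lk b j = 0" for j using lk_le_mdeg[of b j] by simp
  then have "b = 0" by (intro poly_mapping_eqI) simp
  then show "pk b = {}" by simp
qed (simp add: mdeg_def)

lemma mdvd_keys: assumes "mdvd a b" shows "pk a \<subseteq> pk b"
proof
  fix j assume "j \<in> pk a"
  note assms this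
  then have "lk a j \<noteq> 0" "lk a j \<le> lk b j" unfolding mdvd_def by (auto simp: in_keys_iff)
  then show "j \<in> pk b" by (simp add: in_keys_iff)
qed

lemma finite_monos: "finite {b. pk b \<subseteq> {0..n} \<and> mdeg b = d}"
proof -
  define toPM :: "(nat \<Rightarrow> nat) \<Rightarrow> nat \<Rightarrow>\<^sub>0 nat" where
    "toPM f = Abs_poly_mapping (\<lambda>j. if j \<le> n then f j else 0)" for f
  have "{b. pk b \<subseteq> {0..n} \<and> mdeg b = d} \<subseteq> toPM ` (PiE {0..n} (\<lambda>_. {0..d}))"
  proof
    fix b assume b: "b \<in> {b. pk b \<subseteq> {0..n} \<and> mdeg b = d}"
    let ?f = "restrict (lk b) {0..n}"
    have "?f \<in> PiE {0..n} (\<lambda>_. {0..d})" using b lk_le_mdeg by auto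
    moreover have "toPM ?f = b"
    proof -
      have fin: "finite {j. (if j \<le> n then ?f j else 0) \<noteq> 0}"
        by (rule finite_subset[of _ "{0..n}"]) (auto split: if_splits)
      have "lk (toPM ?f) j = lk b j" for j
      proof -
        have "lk (toPM ?f) j = (if j \<le> n then ?f j else 0)" unfolding toPM_def using fin by simp
        also have "\<dots> = lk b j" using b by (auto simp: in_keys_iff)
        finally show ?thesis .
      qed
      then show ?thesis by (intro poly_mapping_eqI) simp
    qed
    ultimately show "b \<in> toPM ` (PiE {0..n} (\<lambda>_. {0..d}))" by (metis image_eqI)
  qed
  moreover have "finite (toPM ` (PiE {0..n} (\<lambda>_. {0..d})))" by (intro finite_imageI finite_PiE) auto
  ultimately show ?thesis by (rule finite_subset)
qed

lemma finite_init_deg: "V \<subseteq> {0..n} \<Longrightarrow> finite (init_deg V ord J m)"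
  by (rule finite_subset[OF _ finite_monos[of n m]]) (auto simp: init_deg_def)

lemma finite_T_deg: "finite (T_deg n l ns m)"
  by (rule finite_subset[OF _ finite_monos[of n m]]) (auto simp: T_deg_def)

locale chainset =
  fixes n l :: nat and ns :: "nat \<Rightarrow> nat" and X :: "nat \<Rightarrow> (nat \<Rightarrow> 'a::field_char_0) set"
  assumes l_pos: "l \<ge> 1"
    and ns0: "ns 0 = 0" and ns_mono: "\<forall>i<l. ns i < ns (Suc i)" and nsl: "ns l = n"
    and closed: "\<forall>i\<in>{1..l}. proj_closed n (X i)"
    and chain: "\<forall>i\<in>{1..l}. \<forall>j\<in>{1..l}. i \<noteq> j \<longrightarrow>
                  ((\<exists>p\<in>X i \<inter> X j. p \<noteq> (\<lambda>_. 0)) \<longleftrightarrow> (i = j + 1 \<or> j = i + 1))"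
    and coords: "\<forall>i\<in>{1..l}. \<forall>p\<in>X i. \<forall>j. (j < ns (i - 1) \<or> ns i < j) \<longrightarrow> p j = 0"
begin

definition V :: "nat \<Rightarrow> nat set" where "V k = {ns (k - 1)..ns k}"
definition J :: "nat \<Rightarrow> 'a mpoly set" where "J k = ideal_of n (X k) \<inter> ring_in (V k)"
definition I :: "'a mpoly set" where "I = ideal_of n (\<Union>i\<in>{1..l}. X i)"
definition B where "B ord k m = init_deg (V k) ord (J k) m"

lemma ns_less: "i < j \<Longrightarrow> j \<le> l \<Longrightarrow> ns i < ns j"
proof (induction j)
  case 0 then show ?case by simp
next
  case (Suc j)
  have "ns j < ns (Suc j)" using ns_mono Suc.prems by simp
  then show ?case using Suc by (cases "i = j") auto
qed

lemma ns_le: "i \<le> j \<Longrightarrow> j \<le> l \<Longrightarrow> ns i \<le> ns j"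
  using ns_less by (cases "i = j") (auto simp: less_imp_le)

lemma ns_less_iff: "i \<le> l \<Longrightarrow> j \<le> l \<Longrightarrow> ns i < ns j \<longleftrightarrow> i < j"
  using ns_less[of i j] ns_le[of j i] by (cases "i < j") auto

lemma ns_le_n: "i \<le> l \<Longrightarrow> ns i \<le> n"
  using ns_le[of i l] nsl by simp

lemma V_sub: "k \<in> {1..l} \<Longrightarrow> V k \<subseteq> {0..n}"
  unfolding V_def using ns_le_n by auto

lemma pt_zero: "i \<in> {1..l} \<Longrightarrow> p \<in> X i \<Longrightarrow> j \<notin> V i \<Longrightarrow> p j = 0"
  using coords unfolding V_def by auto

lemma find_block:
  assumes "a \<le> n"
  shows "\<exists>k\<in>{1..l}. ns (k - 1) \<le> a \<and> a \<le> ns k \<and> (a = ns k \<longrightarrow> k = l)"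
proof (cases "a = n")
  case True
  then show ?thesis using l_pos nsl ns_le[of "l-1" l] by (intro bexI[of _ l]) auto
next
  case False
  then have an: "a < ns l" using assms nsl by simp
  define k where "k = (LEAST k. a < ns k)"
  have ak: "a < ns k" unfolding k_def by (rule LeastI[of _ l]) (rule an)
  have kl: "k \<le> l" unfolding k_def by (rule Least_le) (rule an)
  have k1: "k \<ge> 1" using ak ns0 by (cases k) auto
  have "\<not> a < ns (k - 1)" unfolding k_def by (rule not_less_Least) (use k1 k_def in auto)
  then show ?thesis using ak kl k1 by (intro bexI[of _ k]) auto
qed

lemma V_inter_gt: "k \<in> {1..l} \<Longrightarrow> j \<in> {1..l} \<Longrightarrow> k < j \<Longrightarrow> V k \<inter> V j \<subseteq> {ns k}"
proof -
  assume a: "k \<in> {1..l}" "j \<in> {1..l}" "k < j"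
  have "ns k \<le> ns (j-1)" by (rule ns_le) (use a in auto)
  then show ?thesis unfolding V_def by auto
qed

lemma V_inter_lt: "k \<in> {1..l} \<Longrightarrow> j \<in> {1..l} \<Longrightarrow> j < k \<Longrightarrow> V k \<inter> V j \<subseteq> {ns (k-1)}"
proof -
  assume a: "k \<in> {1..l}" "j \<in> {1..l}" "j < k"
  have "ns j \<le> ns (k-1)" by (rule ns_le) (use a in auto)
  then show ?thesis unfolding V_def by auto
qed

lemma V_inter_far: "k \<in> {1..l} \<Longrightarrow> j \<in> {1..l} \<Longrightarrow> k + 1 < j \<Longrightarrow> V k \<inter> V j = {}"
proof -
  assume a: "k \<in> {1..l}" "j \<in> {1..l}" "k + 1 < j"
  have "ns k < ns (j-1)" by (rule ns_less) (use a in auto)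
  then show ?thesis unfolding V_def by auto
qed

lemma adj_point:
  assumes "k \<ge> 1" "k + 1 \<le> l"
  shows "\<exists>r\<in>X k. r \<noteq> (\<lambda>_. 0) \<and> (\<forall>j. j \<noteq> ns k \<longrightarrow> r j = 0)"
proof -
  have "\<exists>p\<in>X k \<inter> X (k+1). p \<noteq> (\<lambda>_. 0)" using chain assms by auto
  then obtain p where p: "p \<in> X k" "p \<in> X (k+1)" "p \<noteq> (\<lambda>_. 0)" by blast
  have "p j = 0" if "j \<noteq> ns k" for j
  proof (cases "j \<in> V k")
    case True
    then have "j \<notin> V (k+1)" using V_inter_gt[of k "k+1"] assms that by auto
    then show ?thesis using pt_zero[OF _ p(2)] assms by auto
  next
    case False then show ?thesis using pt_zero[OF _ p(1)] assms by auto
  qed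
  then show ?thesis using p by blast
qed

lemma adj_point2:
  assumes "k \<ge> 2" "k \<le> l"
  shows "\<exists>r\<in>X k. r \<noteq> (\<lambda>_. 0) \<and> (\<forall>j. j \<noteq> ns (k-1) \<longrightarrow> r j = 0)"
proof -
  have a1: "k-1 \<in> {1..l}" "k \<in> {1..l}" "k-1 \<noteq> k" "k = (k-1)+1" using assms by auto
  from chain a1(1-3) have "(\<exists>p\<in>X (k-1) \<inter> X k. p \<noteq> (\<lambda>_. 0)) \<longleftrightarrow> (k-1 = k+1 \<or> k = k-1+1)" by blast
  then have "\<exists>p\<in>X (k-1) \<inter> X k. p \<noteq> (\<lambda>_. 0)" using a1(4) by blast
  then obtain p where p: "p \<in> X (k-1)" "p \<in> X k" "p \<noteq> (\<lambda>_. 0)" by blast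
  have "p j = 0" if "j \<noteq> ns (k-1)" for j
  proof (cases "j \<in> V k")
    case True
    have "V k \<inter> V (k-1) \<subseteq> {ns (k-1)}" by (rule V_inter_lt) (use assms in auto)
    then have "j \<notin> V (k-1)" using True that by auto
    moreover have "k - 1 \<in> {1..l}" using assms by auto
    ultimately show ?thesis using pt_zero[OF _ p(1)] by blast
  next
    case False then show ?thesis using pt_zero[OF _ p(2)] assms by auto
  qed
  then show ?thesis using p by blast
qed

lemma J_no_pure_up: "k \<ge> 1 \<Longrightarrow> k + 1 \<le> l \<Longrightarrow> h \<in> J k \<Longrightarrow> \<forall>a\<in>fk h. \<not> pk a \<subseteq> {ns k}"
  using adj_point[of k] no_pure_keys[of n "X k" h] closed unfolding J_def by auto

lemma J_no_pure_down: "k \<ge> 2 \<Longrightarrow> k \<le> l \<Longrightarrow> h \<in> J k \<Longrightarrow> \<forall>a\<in>fk h. \<not> pk a \<subseteq> {ns (k-1)}"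
  using adj_point2[of k] no_pure_keys[of n "X k" h] closed unfolding J_def by auto

lemma J_sub_I: assumes k: "k \<in> {1..l}" and h: "h \<in> J k" shows "h \<in> I"
proof -
  have hr: "h \<in> ring_in (V k)" "h \<in> ideal_of n (X k)" using h unfolding J_def by auto
  have "h \<in> ring_in {0..n}" using hr(1) V_sub[OF k] unfolding ring_in_def by blast
  moreover have "eval h p = 0" if p: "p \<in> (\<Union>i\<in>{1..l}. X i)" "p \<noteq> (\<lambda>_. 0)" for p
  proof -
    obtain j where j: "j \<in> {1..l}" "p \<in> X j" using p(1) by blast
    show ?thesis
    proof (cases "j = k")
      case True then show ?thesis using ideal_ofD[OF hr(2)] j p(2) by blast
    next
      case False
      obtain s where s: "V k \<inter> V j \<subseteq> {s}" "\<forall>a\<in>fk h. \<not> pk a \<subseteq> {s}"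
      proof (cases "k < j")
        case True
        then show ?thesis using that[of "ns k"] V_inter_gt[OF k j(1)] J_no_pure_up[OF _ _ h] k j by auto
      next
        case False
        then have "j < k" using \<open>j \<noteq> k\<close> by simp
        then show ?thesis using that[of "ns (k-1)"] V_inter_lt[OF k j(1)] J_no_pure_down[OF _ _ h] k j by auto
      qed
      show ?thesis
      proof (rule eval_zero_if, rule ballI)
        fix a assume a: "a \<in> fk h"
        then obtain i where i: "i \<in> pk a" "i \<noteq> s" using s(2) by blast
        have "i \<in> V k" using hr(1) a i(1) unfolding ring_in_def by blast
        then have "i \<notin> V j" using s(1) i(2) by blast
        then show "\<exists>i\<in>pk a. p i = 0" using pt_zero[OF j] i(1) by blast
      qed
    qed
  qed
  ultimately show ?thesis unfolding I_def ideal_of_def by blast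
qed

end

context chainset
begin

lemma D1:
  assumes b: "pk b \<subseteq> {0..n}" "pk b \<noteq> {}" "b \<notin> T_deg n l ns m" "mdeg b = m"
  shows "\<exists>k\<in>{1..l}. pk b \<subseteq> V k"
proof -
  define a where "a = Min (pk b)"
  have a: "a \<in> pk b" "\<forall>j\<in>pk b. a \<le> j" unfolding a_def using b(2) by auto
  have an: "a \<le> n" using a b(1) by auto
  obtain k where k: "k \<in> {1..l}" "ns (k - 1) \<le> a" "a \<le> ns k" "a = ns k \<longrightarrow> k = l"
    using find_block[OF an] by blast
  have "pk b \<subseteq> V k"
  proof
    fix j assume j: "j \<in> pk b"
    have j1: "ns (k-1) \<le> j" using a(2) j k(2) by fastforce
    show "j \<in> V k"
    proof (rule ccontr)
      assume "j \<notin> V k"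
      then have jk: "ns k < j" using j1 unfolding V_def by auto
      have jn: "j \<le> n" using j b(1) by auto
      then have "ns k < ns l" using jk nsl by simp
      then have kl: "k < l" using ns_less_iff k(1) by auto
      then have ak: "a < ns k" using k(3,4) by auto
      have "b \<in> T_deg n l ns m"
        unfolding T_deg_def
      proof (intro CollectI conjI)
        show "pk b \<subseteq> {0..n}" "mdeg b = m" using b by auto
        have "k \<in> {1..l-1}" "a \<in> {ns (k-1)..<ns k}" "j \<in> {ns k + 1..n}"
          using k kl ak jk jn by auto
        moreover have "lk b a \<ge> 1" "lk b j \<ge> 1" using a(1) j by (auto simp: in_keys_iff)
        ultimately show "\<exists>i\<in>{1..l-1}. \<exists>j\<in>{ns (i-1)..<ns i}. \<exists>j'\<in>{ns i + 1..n}. lk b j \<ge> 1 \<and> lk b j' \<ge> 1"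
          by blast
      qed
      then show False using b(3) by blast
    qed
  qed
  then show ?thesis using k(1) by blast
qed

lemma D2:
  assumes k: "k \<in> {1..l}" and b: "pk b \<subseteq> V k"
  shows "b \<notin> T_deg n l ns m"
proof
  assume "b \<in> T_deg n l ns m"
  then obtain i j j' where ij: "i \<in> {1..l-1}" "j \<in> {ns (i-1)..<ns i}" "j' \<in> {ns i + 1..n}"
    "lk b j \<ge> 1" "lk b j' \<ge> 1" unfolding T_deg_def by blast
  have "j \<in> pk b" "j' \<in> pk b" using ij(4,5) by (auto simp: in_keys_iff)
  then have "j \<in> V k" "j' \<in> V k" using b by auto
  then have "ns (k-1) < ns i" "ns i < ns k" using ij unfolding V_def by auto
  then have "k - 1 < i" "i < k" using ns_less_iff k ij(1) by auto
  then show False by simp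
qed

lemma T_sub:
  assumes mo: "mono_order {0..n} ord"
  shows "T_deg n l ns m \<subseteq> init_deg {0..n} ord I m"
proof
  fix b assume bT: "b \<in> T_deg n l ns m"
  then obtain i j j' where ij: "i \<in> {1..l-1}" "j \<in> {ns (i-1)..<ns i}" "j' \<in> {ns i + 1..n}"
    "lk b j \<ge> 1" "lk b j' \<ge> 1" unfolding T_deg_def by blast
  have b: "pk b \<subseteq> {0..n}" "mdeg b = m" using bT unfolding T_deg_def by auto
  have jj: "j \<noteq> j'" using ij by auto
  define \<gamma> where "\<gamma> = Poly_Mapping.single j (1::nat) + Poly_Mapping.single j' 1"
  have lg: "lk \<gamma> x = (if x = j then 1 else 0) + (if x = j' then 1 else 0)" for x
    unfolding \<gamma>_def lookup_add lookup_single by simp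
  have kg: "pk \<gamma> = {j, j'}" using jj by (auto simp: in_keys_iff lg split: if_splits)
  have jn: "j \<le> n" "j' \<le> n" using ij ns_le_n[of i] by auto
  define f where "f = Poly_Mapping.single \<gamma> (1::'a)"
  have kf: "fk f = {\<gamma>}" unfolding f_def by simp
  have f0: "f \<noteq> 0" unfolding f_def by (metis lookup_single_eq lookup_zero zero_neq_one)
  have fI: "f \<in> I"
    unfolding I_def ideal_of_def
  proof (intro CollectI conjI ballI impI)
    show "f \<in> ring_in {0..n}" unfolding ring_in_def using kf kg jn by auto
  next
    fix p assume p: "p \<in> (\<Union>i\<in>{1..l}. X i)"
    then obtain i' where i': "i' \<in> {1..l}" "p \<in> X i'" by blast
    have "\<exists>x\<in>{j, j'}. p x = 0"
    proof (cases "i' \<le> i")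
      case True
      have "ns i' \<le> ns i" using ns_le True ij(1) by auto
      then have "j' \<notin> V i'" using ij(3) unfolding V_def by auto
      then show ?thesis using pt_zero[OF i'] by blast
    next
      case False
      have "ns i \<le> ns (i'-1)" using ns_le False i'(1) by auto
      then have "j \<notin> V i'" using ij(2) unfolding V_def by auto
      then show ?thesis using pt_zero[OF i'] by blast
    qed
    then show "eval f p = 0" by (intro eval_zero_if) (simp add: kf kg)
  qed
  have lmf: "lm ord f = \<gamma>"
    by (rule lm_eqI[OF mo]) (use kf kg jn mono_order_D(1)[OF mo, of \<gamma>] in auto)
  have "mdvd \<gamma> b" unfolding mdvd_def using ij(4,5) jj by (simp add: lg)
  then show "b \<in> init_deg {0..n} ord I m"
    unfolding init_deg_def using b fI f0 lmf by blast
qed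

lemma B_sub:
  assumes k: "k \<in> {1..l}"
  shows "B ord k m \<subseteq> init_deg {0..n} ord I m"
  unfolding B_def init_deg_def using J_sub_I[OF k] V_sub[OF k] by blast

lemma init_sub:
  assumes mo: "mono_order {0..n} ord" and m: "m > 0"
  shows "init_deg {0..n} ord I m \<subseteq> T_deg n l ns m \<union> (\<Union>k\<in>{1..l}. B ord k m)"
proof
  fix b assume bI: "b \<in> init_deg {0..n} ord I m"
  then obtain f where f: "f \<in> I" "f \<noteq> 0" "mdvd (lm ord f) b" and b: "pk b \<subseteq> {0..n}" "mdeg b = m"
    unfolding init_deg_def by blast
  show "b \<in> T_deg n l ns m \<union> (\<Union>k\<in>{1..l}. B ord k m)"
  proof (cases "b \<in> T_deg n l ns m")
    case True then show ?thesis by blast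
  next
    case False
    have "pk b \<noteq> {}"
    proof
      assume "pk b = {}"
      then have "mdeg b = 0" using mdeg_zero_iff by blast
      then show False using b(2) m by simp
    qed
    then obtain k where k: "k \<in> {1..l}" "pk b \<subseteq> V k" using D1[OF b(1) _ False b(2)] by blast
    have fr: "\<forall>a\<in>fk f. pk a \<subseteq> {0..n}" using f(1) unfolding I_def ideal_of_def ring_in_def by blast
    define \<alpha> where "\<alpha> = lm ord f"
    have al: "\<alpha> \<in> fk f" "\<forall>b\<in>fk f. ord b \<alpha>" using lm_props[OF mo f(2) fr] unfolding \<alpha>_def by auto
    have aV: "pk \<alpha> \<subseteq> V k" using mdvd_keys[OF f(3)] k(2) unfolding \<alpha>_def by blast
    define g where "g = restr f (\<lambda>a. pk a \<subseteq> V k)"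
    have kgk: "fk g = {a \<in> fk f. pk a \<subseteq> V k}" unfolding g_def keys_restr ..
    have gR: "g \<in> ring_in (V k)" unfolding ring_in_def using kgk by blast
    have gR0: "g \<in> ring_in {0..n}" using gR V_sub[OF k(1)] unfolding ring_in_def by blast
    have "eval g p = 0" if p: "p \<in> X k" "p \<noteq> (\<lambda>_. 0)" for p
    proof -
      have "eval f p = 0" using f(1) p k(1) unfolding I_def ideal_of_def by blast
      moreover have "eval g p = eval f p"
      proof -
        have e1: "eval g p = (\<Sum>a\<in>{a \<in> fk f. pk a \<subseteq> V k}. Poly_Mapping.lookup f a * mon a p)"
          unfolding g_def by (rule eval_restr)
        have e2: "(\<Sum>a\<in>{a \<in> fk f. pk a \<subseteq> V k}. Poly_Mapping.lookup f a * mon a p)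
            = (\<Sum>a\<in>fk f. Poly_Mapping.lookup f a * mon a p)"
        proof (rule sum.mono_neutral_left)
          show "\<forall>a\<in>fk f - {a \<in> fk f. pk a \<subseteq> V k}. Poly_Mapping.lookup f a * mon a p = 0"
          proof
            fix a assume "a \<in> fk f - {a \<in> fk f. pk a \<subseteq> V k}"
            then obtain x where "x \<in> pk a" "x \<notin> V k" by blast
            then have "mon a p = 0" using mon_zero pt_zero[OF k(1) p(1)] by blast
            then show "Poly_Mapping.lookup f a * mon a p = 0" by simp
          qed
        qed auto
        show ?thesis using e1 e2 eval_mon[of f p] by simp
      qed
      ultimately show ?thesis by simp
    qed
    then have gJ: "g \<in> J k" unfolding J_def ideal_of_def using gR gR0 by blast
    have ag: "\<alpha> \<in> fk g" using kgk al(1) aV by blast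
    then have g0: "g \<noteq> 0" by auto
    have "lm ord g = \<alpha>"
      by (rule lm_eqI[OF mo]) (use kgk fr ag al(2) in auto)
    then have "b \<in> B ord k m"
      unfolding B_def init_deg_def using gJ g0 f(3) b k(2) unfolding \<alpha>_def by auto
    then show ?thesis using k(1) by blast
  qed
qed

lemma init_eq:
  assumes mo: "mono_order {0..n} ord" and m: "m > 0"
  shows "init_deg {0..n} ord I m = T_deg n l ns m \<union> (\<Union>k\<in>{1..l}. B ord k m)"
  using init_sub[OF mo m] T_sub[OF mo] B_sub by blast

lemma DT: "k \<in> {1..l} \<Longrightarrow> T_deg n l ns m \<inter> B ord k m = {}"
  using D2 unfolding B_def init_deg_def by blast

lemma DB_lt:
  assumes k: "k \<in> {1..l}" "k' \<in> {1..l}" "k < k'" and mo: "mono_order (V k) ord"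
  shows "B ord k m \<inter> B ord' k' m = {}"
proof (rule ccontr)
  assume "B ord k m \<inter> B ord' k' m \<noteq> {}"
  then obtain b where b: "b \<in> B ord k m" "b \<in> B ord' k' m" by blast
  have "pk b \<subseteq> V k" "pk b \<subseteq> V k'" using b unfolding B_def init_deg_def by auto
  then have bs: "pk b \<subseteq> {ns k}" using V_inter_gt[OF k] by blast
  obtain g where g: "g \<in> J k" "g \<noteq> 0" "mdvd (lm ord g) b" using b(1) unfolding B_def init_deg_def by blast
  have gr: "\<forall>a\<in>fk g. pk a \<subseteq> V k" using g(1) unfolding J_def ring_in_def by blast
  have "lm ord g \<in> fk g" using lm_props[OF mo g(2) gr] by blast
  moreover have "pk (lm ord g) \<subseteq> {ns k}" using mdvd_keys[OF g(3)] bs by blast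
  moreover have "\<forall>a\<in>fk g. \<not> pk a \<subseteq> {ns k}" by (rule J_no_pure_up) (use k g(1) in auto)
  ultimately show False by blast
qed

lemma DB:
  assumes k: "k \<in> {1..l}" "k' \<in> {1..l}" "k \<noteq> k'"
    and mo: "mono_order (V k) ord" "mono_order (V k') ord'"
  shows "B ord k m \<inter> B ord' k' m = {}"
proof (cases "k < k'")
  case True then show ?thesis using DB_lt[OF k(1,2) True mo(1)] by blast
next
  case False then have "k' < k" using k(3) by simp
  then show ?thesis using DB_lt[OF k(2,1) _ mo(2)] by blast
qed

lemma vecsum_split:
  assumes mo: "mono_order {0..n} ord" and m: "m > 0"
  shows "vecsum (init_deg {0..n} ord I m) =
           (\<lambda>j. vecsum (T_deg n l ns m) j + (\<Sum>k\<in>{1..l}. vecsum (B ord k m) j))"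
proof
  fix j
  have finB: "\<forall>k\<in>{1..l}. finite (B ord k m)" unfolding B_def using finite_init_deg V_sub by blast
  have moV: "mono_order (V k) ord" if "k \<in> {1..l}" for k using mono_order_mono[OF mo V_sub[OF that]] .
  have disj: "\<forall>k\<in>{1..l}. \<forall>k'\<in>{1..l}. k \<noteq> k' \<longrightarrow> B ord k m \<inter> B ord k' m = {}"
    using DB moV by blast
  have finU: "finite (\<Union>k\<in>{1..l}. B ord k m)" using finB by blast
  have "(\<Sum>a\<in>init_deg {0..n} ord I m. lk a j)
      = (\<Sum>a\<in>T_deg n l ns m. lk a j) + (\<Sum>a\<in>(\<Union>k\<in>{1..l}. B ord k m). lk a j)"
  proof -
    have dd: "T_deg n l ns m \<inter> (\<Union>k\<in>{1..l}. B ord k m) = {}" using DT by blast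
    show ?thesis unfolding init_eq[OF mo m] by (rule sum.union_disjoint[OF finite_T_deg finU dd])
  qed
  also have "(\<Sum>a\<in>(\<Union>k\<in>{1..l}. B ord k m). lk a j) = (\<Sum>k\<in>{1..l}. \<Sum>a\<in>B ord k m. lk a j)"
    by (rule sum.UNION_disjoint) (use finB disj in auto)
  finally show "vecsum (init_deg {0..n} ord I m) j =
           vecsum (T_deg n l ns m) j + (\<Sum>k\<in>{1..l}. vecsum (B ord k m) j)"
    unfolding vecsum_def by simp
qed

end

lemma sum_single_nz:
  assumes "finite A" "x \<in> A" "\<forall>i\<in>A. i \<noteq> x \<longrightarrow> f i = (0::nat)"
  shows "sum f A = f x"
proof -
  have "sum f A = sum f {x}"
    by (rule sum.mono_neutral_right) (use assms in auto)
  then show ?thesis by simp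
qed

lemma sum_keys_mdeg: "finite A \<Longrightarrow> pk a \<subseteq> A \<Longrightarrow> (\<Sum>i\<in>A. lk a i) = mdeg a"
  unfolding mdeg_def by (rule sum.mono_neutral_right) (auto simp: in_keys_iff)

lemma sum_keys_zero: "pk a \<inter> A = {} \<Longrightarrow> (\<Sum>i\<in>A. lk a i) = 0"
  by (rule sum.neutral) (auto simp: in_keys_iff)

lemma keys_add_nat: "pk (a + b) = pk a \<union> pk b"
  by (auto simp: in_keys_iff lookup_add)

lemma mdeg_add: "mdeg (a + b) = mdeg a + mdeg b"
proof -
  have f: "finite (pk a \<union> pk b)" by simp
  have "mdeg (a + b) = (\<Sum>i\<in>pk a \<union> pk b. lk (a + b) i)"
    using sum_keys_mdeg[OF f, of "a+b"] keys_add_nat by simp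
  also have "\<dots> = (\<Sum>i\<in>pk a \<union> pk b. lk a i) + (\<Sum>i\<in>pk a \<union> pk b. lk b i)"
    by (simp add: lookup_add sum.distrib)
  also have "\<dots> = mdeg a + mdeg b" using sum_keys_mdeg[OF f] by simp
  finally show ?thesis .
qed

context chainset
begin

definition pif :: "nat \<Rightarrow> (nat \<Rightarrow>\<^sub>0 nat) \<Rightarrow> nat \<Rightarrow> nat" where
  "pif k a j = (if j = ns (k-1) then (\<Sum>i\<in>{0..ns (k-1)}. lk a i)
     else if ns (k-1) < j \<and> j < ns k then lk a j
     else if j = ns k then (\<Sum>i\<in>{ns k..n}. lk a i) else 0)"

definition pi :: "nat \<Rightarrow> (nat \<Rightarrow>\<^sub>0 nat) \<Rightarrow> (nat \<Rightarrow>\<^sub>0 nat)" where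
  "pi k a = Abs_poly_mapping (pif k a)"

lemma lookup_pi: "lk (pi k a) = pif k a"
proof -
  have "finite {j. pif k a j \<noteq> 0}"
    by (rule finite_subset[of _ "{ns (k-1)} \<union> {..ns k}"]) (auto simp: pif_def split: if_splits)
  then show ?thesis unfolding pi_def by simp
qed

lemma pi_keys: "k \<in> {1..l} \<Longrightarrow> pk (pi k a) \<subseteq> V k"
proof
  fix j assume k: "k \<in> {1..l}" and j: "j \<in> pk (pi k a)"
  have "ns (k-1) \<le> ns k" using ns_le k by auto
  then show "j \<in> V k" using j unfolding V_def by (auto simp: in_keys_iff lookup_pi pif_def split: if_splits)
qed

lemma pi_add: "pi k (a + b) = pi k a + pi k b"
  by (rule poly_mapping_eqI) (simp add: lookup_add lookup_pi pif_def sum.distrib)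

lemma pi_self:
  assumes k: "k \<in> {1..l}" and a: "pk a \<subseteq> V k"
  shows "pi k a = a"
proof (rule poly_mapping_eqI)
  fix j
  have z: "lk a i = 0" if "i \<notin> V k" for i using a that by (auto simp: in_keys_iff)
  have nk: "ns (k-1) < ns k" "ns k \<le> n" using ns_less[of "k-1" k] ns_le_n k by auto
  show "lk (pi k a) j = lk a j"
  proof -
    have c1: "(\<Sum>i\<in>{0..ns (k-1)}. lk a i) = lk a (ns (k-1))"
      by (rule sum_single_nz) (use z in \<open>auto simp: V_def\<close>)
    have c2: "(\<Sum>i\<in>{ns k..n}. lk a i) = lk a (ns k)"
      by (rule sum_single_nz) (use z nk in \<open>auto simp: V_def\<close>)
    show ?thesis unfolding lookup_pi pif_def using c1 c2 z nk by (auto simp: V_def)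
  qed
qed

lemma pi_other:
  assumes k: "k \<in> {1..l}" and i: "i \<in> {1..l}" "i \<noteq> k"
    and a: "pk a \<subseteq> V k" and b: "pk b \<subseteq> V k" and d: "mdeg a = mdeg b"
  shows "pi i a = pi i b"
proof (cases "i < k")
  case True
  have o1: "ns (i-1) < ns (k-1)" using ns_less[of "i-1" "k-1"] True i k by auto
  have o2: "ns i \<le> ns (k-1)" using ns_le[of i "k-1"] True k by auto
  have s0: "(\<Sum>x\<in>{0..ns (i - Suc 0)}. lk c x) = 0" if "pk c \<subseteq> V k" for c
    by (rule sum_keys_zero) (use that o1 in \<open>auto simp: V_def\<close>)
  have s1: "(\<Sum>x\<in>{ns i..n}. lk c x) = mdeg c" if "pk c \<subseteq> V k" for c
  proof -
    have "V k \<subseteq> {ns i..n}" using o2 ns_le_n[of k] k by (auto simp: V_def)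
    then show ?thesis by (intro sum_keys_mdeg) (use that in auto)
  qed
  have z: "lk c j = 0" if "pk c \<subseteq> V k" "j < ns i" for c j
    using that o2 by (auto simp: in_keys_iff V_def)
  show ?thesis
    by (rule poly_mapping_eqI) (simp add: lookup_pi pif_def s0[OF a] s0[OF b] s1[OF a] s1[OF b] d z[OF a] z[OF b])
next
  case False
  then have ik: "k < i" using i(2) by simp
  have o1: "ns k \<le> ns (i-1)" using ns_le[of k "i-1"] ik i by auto
  have o2: "ns k < ns i" using ns_less[of k i] ik i by auto
  have s0: "(\<Sum>x\<in>{0..ns (i - Suc 0)}. lk c x) = mdeg c" if "pk c \<subseteq> V k" for c
  proof -
    have "V k \<subseteq> {0..ns (i-1)}" using o1 by (auto simp: V_def)
    then show ?thesis by (intro sum_keys_mdeg) (use that in auto)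
  qed
  have s1: "(\<Sum>x\<in>{ns i..n}. lk c x) = 0" if "pk c \<subseteq> V k" for c
    by (rule sum_keys_zero) (use that o2 in \<open>auto simp: V_def\<close>)
  have z: "lk c j = 0" if "pk c \<subseteq> V k" "ns (i - Suc 0) < j" for c j
    using that o1 by (auto simp: in_keys_iff V_def)
  show ?thesis
    by (rule poly_mapping_eqI) (simp add: lookup_pi pif_def s0[OF a] s0[OF b] s1[OF a] s1[OF b] d z[OF a] z[OF b])
qed

definition same where "same a b \<longleftrightarrow> (\<forall>k\<in>{1..l}. pi k a = pi k b)"

definition blex where
  "blex ords a b \<longleftrightarrow> (\<exists>k\<in>{1..l}. (\<forall>i\<in>{1..<k}. pi i a = pi i b) \<and> pi k a \<noteq> pi k b \<and> ords k (pi k a) (pi k b))"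

definition fd where "fd a b = (LEAST k. k \<in> {1..l} \<and> pi k a \<noteq> pi k b)"

lemma fd_props:
  assumes "\<not> same a b"
  shows "fd a b \<in> {1..l}" "pi (fd a b) a \<noteq> pi (fd a b) b" "\<forall>i\<in>{1..<fd a b}. pi i a = pi i b"
proof -
  obtain k where k: "k \<in> {1..l}" "pi k a \<noteq> pi k b" using assms unfolding same_def by blast
  have "fd a b \<in> {1..l} \<and> pi (fd a b) a \<noteq> pi (fd a b) b"
    unfolding fd_def by (rule LeastI[of _ k]) (use k in blast)
  then show "fd a b \<in> {1..l}" "pi (fd a b) a \<noteq> pi (fd a b) b" by auto
  show "\<forall>i\<in>{1..<fd a b}. pi i a = pi i b"
  proof
    fix i assume i: "i \<in> {1..<fd a b}"
    have "\<not> (i \<in> {1..l} \<and> pi i a \<noteq> pi i b)"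
      unfolding fd_def by (rule not_less_Least) (use i in \<open>auto simp: fd_def\<close>)
    moreover have "i \<in> {1..l}" using i \<open>fd a b \<in> {1..l}\<close> by auto
    ultimately show "pi i a = pi i b" by blast
  qed
qed

lemma fd_unique:
  assumes "k \<in> {1..l}" "\<forall>i\<in>{1..<k}. pi i a = pi i b" "pi k a \<noteq> pi k b"
  shows "fd a b = k"
proof -
  have ns: "\<not> same a b" using assms unfolding same_def by blast
  note F = fd_props[OF ns]
  show ?thesis
  proof (rule ccontr)
    assume "fd a b \<noteq> k"
    then have "fd a b < k \<or> k < fd a b" by auto
    then show False
    proof
      assume "fd a b < k" then show False using assms(2) F by auto
    next
      assume "k < fd a b" then show False using assms(1,3) F by auto
    qed
  qed
qed

lemma blex_iff:
  "blex ords a b \<longleftrightarrow> (\<not> same a b \<and> ords (fd a b) (pi (fd a b) a) (pi (fd a b) b))"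
proof
  assume "blex ords a b"
  then obtain k where k: "k \<in> {1..l}" "\<forall>i\<in>{1..<k}. pi i a = pi i b" "pi k a \<noteq> pi k b"
    "ords k (pi k a) (pi k b)" unfolding blex_def by blast
  have "fd a b = k" using fd_unique k by blast
  then show "\<not> same a b \<and> ords (fd a b) (pi (fd a b) a) (pi (fd a b) b)"
    using k unfolding same_def by auto
next
  assume "\<not> same a b \<and> ords (fd a b) (pi (fd a b) a) (pi (fd a b) b)"
  then show "blex ords a b" unfolding blex_def using fd_props by blast
qed

lemma fd_sym: "fd a b = fd b a"
  unfolding fd_def by metis

lemma same_sym: "same a b = same b a" unfolding same_def by metis

definition G where
  "G ords a b \<longleftrightarrow> mdeg a < mdeg b \<or> (mdeg a = mdeg b \<and> (blex ords a b \<or> (same a b \<and> a \<le> b)))"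

end

context chainset
begin

lemma blex_same_left:
  assumes "same a b" shows "blex ords a c \<longleftrightarrow> blex ords b c"
proof -
  have e: "\<And>k. 1 \<le> k \<Longrightarrow> k \<le> l \<Longrightarrow> pi k a = pi k b" using assms unfolding same_def by auto
  show ?thesis unfolding blex_def
  proof (intro bex_cong refl)
    fix k assume k: "k \<in> {1..l}"
    have "\<forall>i\<in>{1..<k}. pi i a = pi i b" using e k by auto
    moreover have "pi k a = pi k b" using e k by auto
    ultimately show "((\<forall>i\<in>{1..<k}. pi i a = pi i c) \<and> pi k a \<noteq> pi k c \<and> ords k (pi k a) (pi k c)) =
          ((\<forall>i\<in>{1..<k}. pi i b = pi i c) \<and> pi k b \<noteq> pi k c \<and> ords k (pi k b) (pi k c))"
      by auto
  qed
qed

lemma blex_same_right: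
  assumes "same b c" shows "blex ords a b \<longleftrightarrow> blex ords a c"
proof -
  have e: "\<And>k. 1 \<le> k \<Longrightarrow> k \<le> l \<Longrightarrow> pi k b = pi k c" using assms unfolding same_def by auto
  show ?thesis unfolding blex_def
  proof (intro bex_cong refl)
    fix k assume k: "k \<in> {1..l}"
    have "\<forall>i\<in>{1..<k}. pi i b = pi i c" using e k by auto
    moreover have "pi k b = pi k c" using e k by auto
    ultimately show "((\<forall>i\<in>{1..<k}. pi i a = pi i b) \<and> pi k a \<noteq> pi k b \<and> ords k (pi k a) (pi k b)) =
          ((\<forall>i\<in>{1..<k}. pi i a = pi i c) \<and> pi k a \<noteq> pi k c \<and> ords k (pi k a) (pi k c))"
      by auto
  qed
qed

lemma same_trans: "same a b \<Longrightarrow> same b c \<Longrightarrow> same a c" unfolding same_def by auto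

lemma blex_not_same: "blex ords a b \<Longrightarrow> \<not> same a b" using blex_iff by blast

context
  fixes ords :: "nat \<Rightarrow> (nat \<Rightarrow>\<^sub>0 nat) \<Rightarrow> (nat \<Rightarrow>\<^sub>0 nat) \<Rightarrow> bool"
  assumes MO: "\<forall>k\<in>{1..l}. mono_order (V k) (ords k)"
begin

lemma G_refl: "G ords a a"
  unfolding G_def same_def by simp

lemma blex_total: "\<not> same a b \<Longrightarrow> blex ords a b \<or> blex ords b a"
proof -
  assume ns: "\<not> same a b"
  note F = fd_props[OF ns]
  have "ords (fd a b) (pi (fd a b) a) (pi (fd a b) b) \<or> ords (fd a b) (pi (fd a b) b) (pi (fd a b) a)"
    by (rule mono_order_D(4)[OF MO[rule_format, OF F(1)]]) (use pi_keys F(1) in auto)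
  then show ?thesis using ns unfolding blex_iff fd_sym[of b a] same_sym[of b a] by blast
qed

lemma blex_antisym: "blex ords a b \<Longrightarrow> blex ords b a \<Longrightarrow> False"
proof -
  assume ab: "blex ords a b" and ba: "blex ords b a"
  have ns: "\<not> same a b" using ab blex_not_same by blast
  note F = fd_props[OF ns]
  have o1: "ords (fd a b) (pi (fd a b) a) (pi (fd a b) b)" using ab blex_iff by blast
  have o2: "ords (fd a b) (pi (fd a b) b) (pi (fd a b) a)" using ba blex_iff fd_sym[of b a] by metis
  have "pi (fd a b) a = pi (fd a b) b"
    by (rule mono_order_D(2)[OF MO[rule_format, OF F(1)] _ _ o1 o2]) (use pi_keys F(1) in auto)
  then show False using F(2) by blast
qed

lemma blex_trans: "blex ords a b \<Longrightarrow> blex ords b c \<Longrightarrow> blex ords a c"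
proof -
  assume ab: "blex ords a b" and bc: "blex ords b c"
  obtain k1 where k1: "k1 \<in> {1..l}" "\<forall>i\<in>{1..<k1}. pi i a = pi i b" "pi k1 a \<noteq> pi k1 b"
    "ords k1 (pi k1 a) (pi k1 b)" using ab unfolding blex_def by blast
  obtain k2 where k2: "k2 \<in> {1..l}" "\<forall>i\<in>{1..<k2}. pi i b = pi i c" "pi k2 b \<noteq> pi k2 c"
    "ords k2 (pi k2 b) (pi k2 c)" using bc unfolding blex_def by blast
  consider "k1 < k2" | "k2 < k1" | "k1 = k2" by linarith
  then show ?thesis
  proof cases
    case 1
    have "\<forall>i\<in>{1..<k1}. pi i a = pi i c" using k1(2) k2(2) 1 by auto
    moreover have "pi k1 b = pi k1 c" using k2(2) 1 k1(1) by auto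
    ultimately show ?thesis unfolding blex_def using k1 by (intro bexI[of _ k1]) auto
  next
    case 2
    have "\<forall>i\<in>{1..<k2}. pi i a = pi i c" using k1(2) k2(2) 2 by auto
    moreover have "pi k2 a = pi k2 b" using k1(2) 2 k2(1) by auto
    ultimately show ?thesis unfolding blex_def using k2 by (intro bexI[of _ k2]) auto
  next
    case 3
    note mo = MO[rule_format, OF k1(1)]
    have kk: "pk (pi k1 a) \<subseteq> V k1" "pk (pi k1 b) \<subseteq> V k1" "pk (pi k1 c) \<subseteq> V k1"
      using pi_keys k1(1) by auto
    have o: "ords k1 (pi k1 a) (pi k1 c)"
      by (rule mono_order_D(3)[OF mo kk k1(4)]) (use k2(4) 3 in simp)
    have ne: "pi k1 a \<noteq> pi k1 c"
    proof
      assume e: "pi k1 a = pi k1 c"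
      have "pi k1 a = pi k1 b"
        by (rule mono_order_D(2)[OF mo kk(1,2) k1(4)]) (use k2(4) 3 e in simp)
      then show False using k1(3) by blast
    qed
    have "\<forall>i\<in>{1..<k1}. pi i a = pi i c" using k1(2) k2(2) 3 by auto
    then show ?thesis unfolding blex_def using k1(1) ne o by blast
  qed
qed

lemma G_total: "G ords a b \<or> G ords b a"
proof (cases "mdeg a = mdeg b")
  case False then show ?thesis unfolding G_def by auto
next
  case True
  show ?thesis
  proof (cases "same a b")
    case True
    have "a \<le> b \<or> b \<le> a" by (rule linear)
    then show ?thesis using \<open>mdeg a = mdeg b\<close> True same_sym[of a b] unfolding G_def by auto
  next
    case False
    then show ?thesis using blex_total \<open>mdeg a = mdeg b\<close> unfolding G_def by auto
  qed
qed

lemma G_antisym: assumes ab: "G ords a b" and ba: "G ords b a" shows "a = b"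
proof -
  have d: "mdeg a = mdeg b" using ab ba unfolding G_def by auto
  have r1: "blex ords a b \<or> (same a b \<and> a \<le> b)" using ab d unfolding G_def by auto
  have r2: "blex ords b a \<or> (same b a \<and> b \<le> a)" using ba d unfolding G_def by auto
  show ?thesis
  proof (cases "blex ords a b")
    case True
    then have "\<not> same b a" using blex_not_same same_sym by metis
    then have "blex ords b a" using r2 by blast
    then show ?thesis using blex_antisym True by blast
  next
    case False
    then have "same a b" "a \<le> b" using r1 by auto
    then have "\<not> blex ords b a" using blex_not_same same_sym by metis
    then have "b \<le> a" using r2 by blast
    then show ?thesis using \<open>a \<le> b\<close> by simp
  qed
qed

lemma G_trans: "G ords a b \<Longrightarrow> G ords b c \<Longrightarrow> G ords a c"
proof -
  assume ab: "G ords a b" and bc: "G ords b c"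
  show ?thesis
  proof (cases "mdeg a = mdeg b \<and> mdeg b = mdeg c")
    case False then show ?thesis using ab bc unfolding G_def by auto
  next
    case True
    have ab': "blex ords a b \<or> (same a b \<and> a \<le> b)" using ab True unfolding G_def by auto
    have bc': "blex ords b c \<or> (same b c \<and> b \<le> c)" using bc True unfolding G_def by auto
    have "blex ords a c \<or> (same a c \<and> a \<le> c)"
    proof (cases "blex ords a b")
      case True
      show ?thesis
      proof (cases "blex ords b c")
        case True then show ?thesis using blex_trans \<open>blex ords a b\<close> by blast
      next
        case False then have "same b c" using bc' by blast
        then show ?thesis using blex_same_right \<open>blex ords a b\<close> by blast
      qed
    next
      case False
      then have abs: "same a b" "a \<le> b" using ab' by auto
      show ?thesis
      proof (cases "blex ords b c")
        case True then show ?thesis using blex_same_left[OF abs(1)] by blast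
      next
        case False then have "same b c" "b \<le> c" using bc' by auto
        then show ?thesis using abs same_trans order_trans by blast
      qed
    qed
    then show ?thesis using True unfolding G_def by auto
  qed
qed

lemma G_add:
  assumes ab: "G ords a b" and a: "pk a \<subseteq> {0..n}" and b: "pk b \<subseteq> {0..n}" and c: "pk c \<subseteq> {0..n}"
  shows "G ords (a + c) (b + c)"
proof (cases "mdeg a < mdeg b")
  case True then show ?thesis unfolding G_def mdeg_add by auto
next
  case False
  then have d: "mdeg a = mdeg b" and r: "blex ords a b \<or> (same a b \<and> a \<le> b)" using ab unfolding G_def by auto
  have "blex ords (a + c) (b + c) \<or> (same (a + c) (b + c) \<and> a + c \<le> b + c)"
    using r
  proof
    assume "blex ords a b"
    then obtain k where k: "k \<in> {1..l}" "\<forall>i\<in>{1..<k}. pi i a = pi i b" "pi k a \<noteq> pi k b"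
      "ords k (pi k a) (pi k b)" unfolding blex_def by blast
    have "ords k (pi k a + pi k c) (pi k b + pi k c)"
      by (rule mono_order_D(5)[OF MO[rule_format, OF k(1)] _ _ _ k(4)]) (use pi_keys k(1) in auto)
    then have "blex ords (a + c) (b + c)" unfolding blex_def pi_add using k by (intro bexI[of _ k]) auto
    then show ?thesis by blast
  next
    assume "same a b \<and> a \<le> b"
    then show ?thesis unfolding same_def pi_add by (auto intro: add_right_mono)
  qed
  then show ?thesis using d unfolding G_def mdeg_add by auto
qed

lemma G_wo:
  assumes A: "A \<subseteq> {a. pk a \<subseteq> {0..n}}" "A \<noteq> {}"
  shows "\<exists>a\<in>A. \<forall>b\<in>A. G ords a b"
proof -
  define d where "d = (LEAST d. \<exists>a\<in>A. mdeg a = d)"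
  have ex: "\<exists>a\<in>A. mdeg a = d" unfolding d_def by (rule LeastI_ex) (use A(2) in blast)
  have dle: "d \<le> mdeg b" if "b \<in> A" for b unfolding d_def by (rule Least_le) (use that in blast)
  define Ad where "Ad = {a\<in>A. mdeg a = d}"
  have fin: "finite Ad" by (rule finite_subset[OF _ finite_monos[of n d]]) (use A(1) in \<open>auto simp: Ad_def\<close>)
  have ne: "Ad \<noteq> {}" using ex unfolding Ad_def by blast
  obtain a0 where a0: "a0 \<in> Ad" "\<forall>y\<in>Ad. G ords a0 y"
    using finite_min_rel[OF fin ne, of "G ords"] G_total G_trans by blast
  have "\<forall>b\<in>A. G ords a0 b"
  proof
    fix b assume b: "b \<in> A"
    show "G ords a0 b"
    proof (cases "mdeg b = d")
      case True then show ?thesis using a0 b unfolding Ad_def by blast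
    next
      case False
      then have "mdeg a0 < mdeg b" using dle[OF b] a0(1) unfolding Ad_def by auto
      then show ?thesis unfolding G_def by simp
    qed
  qed
  then show ?thesis using a0(1) unfolding Ad_def by blast
qed

lemma G_mono_order: "mono_order {0..n} (G ords)"
  unfolding mono_order_iff
proof (intro conjI allI impI)
  fix A assume "A \<subseteq> {a. pk a \<subseteq> {0..n}}" "A \<noteq> {}"
  then show "\<exists>a\<in>A. \<forall>b\<in>A. G ords a b" by (rule G_wo)
next
  fix a :: "nat \<Rightarrow>\<^sub>0 nat" show "G ords a a" by (rule G_refl)
next
  fix a b :: "nat \<Rightarrow>\<^sub>0 nat" assume "G ords a b" "G ords b a" then show "a = b" by (rule G_antisym)
next
  fix a b c :: "nat \<Rightarrow>\<^sub>0 nat" assume "G ords a b" "G ords b c" then show "G ords a c" by (rule G_trans)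
next
  fix a b :: "nat \<Rightarrow>\<^sub>0 nat" show "G ords a b \<or> G ords b a" by (rule G_total)
next
  fix a b c :: "nat \<Rightarrow>\<^sub>0 nat" assume "pk a \<subseteq> {0..n}" "pk b \<subseteq> {0..n}" "pk c \<subseteq> {0..n}" "G ords a b"
  then show "G ords (a + c) (b + c)" using G_add by blast
qed

lemma G_agree:
  assumes k: "k \<in> {1..l}" and a: "pk a \<subseteq> V k" and b: "pk b \<subseteq> V k" and d: "mdeg a = mdeg b"
  shows "G ords a b \<longleftrightarrow> ords k a b"
proof (cases "a = b")
  case True
  then show ?thesis using G_refl mono_order_D(1)[OF MO[rule_format, OF k] a] by simp
next
  case False
  have pk_: "pi k a = a" "pi k b = b" using pi_self k a b by auto
  have pre: "\<forall>i\<in>{1..<k}. pi i a = pi i b" using pi_other[OF k _ _ a b d] k by auto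
  have "pi k a \<noteq> pi k b" using pk_ False by simp
  then have ns: "\<not> same a b" unfolding same_def using k by blast
  have f: "fd a b = k" by (rule fd_unique[OF k pre]) (use pk_ False in simp)
  have "G ords a b \<longleftrightarrow> blex ords a b" unfolding G_def using d ns by simp
  also have "\<dots> \<longleftrightarrow> ords k a b" unfolding blex_iff f pk_ using ns by simp
  finally show ?thesis .
qed

end

end

lemma conv_index:
  assumes K: "finite K" and w: "\<forall>k\<in>K. w k \<ge> 0" "(\<Sum>k\<in>K. w k) = 1" and p: "\<forall>k\<in>K. p k \<in> P"
  shows "(\<lambda>j. \<Sum>k\<in>K. w k * p k j) \<in> conv P"
proof -
  define F where "F = p ` K"
  define u where "u y = (\<Sum>k\<in>{k\<in>K. p k = y}. w k)" for y
  have Kne: "K \<noteq> {}" using w(2) by auto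
  have "finite F" "F \<noteq> {}" "F \<subseteq> P" unfolding F_def using K Kne p by auto
  moreover have "\<forall>y\<in>F. u y \<ge> 0" unfolding u_def using w(1) by (auto intro: sum_nonneg)
  moreover have "(\<Sum>y\<in>F. u y) = 1"
    unfolding u_def F_def using sum.image_gen[OF K, of w p] w(2) by simp
  moreover have "(\<lambda>j. \<Sum>k\<in>K. w k * p k j) = (\<lambda>j. \<Sum>y\<in>F. u y * y j)"
  proof
    fix j
    have "(\<Sum>k\<in>K. w k * p k j) = (\<Sum>y\<in>F. \<Sum>k\<in>{k\<in>K. p k = y}. w k * p k j)"
      unfolding F_def by (rule sum.image_gen[OF K])
    also have "\<dots> = (\<Sum>y\<in>F. u y * y j)"
      unfolding u_def sum_distrib_right by (intro sum.cong refl) auto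
    finally show "(\<Sum>k\<in>K. w k * p k j) = (\<Sum>y\<in>F. u y * y j)" .
  qed
  ultimately show ?thesis unfolding conv_def by blast
qed

lemma conv_translate:
  "conv ((\<lambda>x j. t j + x j) ` W) = (\<lambda>x j. t j + x j) ` conv W"
proof
  show "conv ((\<lambda>x j. t j + x j) ` W) \<subseteq> (\<lambda>x j. t j + x j) ` conv W"
  proof
    fix x assume "x \<in> conv ((\<lambda>x j. t j + x j) ` W)"
    then obtain F u where F: "finite F" "F \<noteq> {}" "F \<subseteq> (\<lambda>x j. t j + x j) ` W" "\<forall>y\<in>F. u y \<ge> 0"
      "(\<Sum>y\<in>F. u y) = 1" "x = (\<lambda>j. \<Sum>y\<in>F. u y * y j)" unfolding conv_def by blast
    define g where "g y = (\<lambda>j. y j - t j)" for y :: "nat \<Rightarrow> real"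
    have gW: "\<forall>y\<in>F. g y \<in> W" using F(3) unfolding g_def by auto
    have z: "(\<lambda>j. \<Sum>y\<in>F. u y * g y j) \<in> conv W" by (rule conv_index[OF F(1) F(4) F(5) gW])
    have "x = (\<lambda>j. t j + (\<Sum>y\<in>F. u y * g y j))"
    proof
      fix j
      have "(\<Sum>y\<in>F. u y * y j) = (\<Sum>y\<in>F. u y * t j + u y * g y j)"
        unfolding g_def by (intro sum.cong refl) (simp add: algebra_simps)
      also have "\<dots> = t j + (\<Sum>y\<in>F. u y * g y j)"
        unfolding sum.distrib sum_distrib_right[symmetric] using F(5) by simp
      finally show "x j = t j + (\<Sum>y\<in>F. u y * g y j)" using F(6) by simp
    qed
    then have "x = (\<lambda>x j. t j + x j) (\<lambda>j. \<Sum>y\<in>F. u y * g y j)" by simp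
    then show "x \<in> (\<lambda>x j. t j + x j) ` conv W" using z by (rule image_eqI)
  qed
next
  show "(\<lambda>x j. t j + x j) ` conv W \<subseteq> conv ((\<lambda>x j. t j + x j) ` W)"
  proof
    fix x assume "x \<in> (\<lambda>x j. t j + x j) ` conv W"
    then obtain z where z: "z \<in> conv W" "x = (\<lambda>j. t j + z j)" by blast
    then obtain F u where F: "finite F" "F \<noteq> {}" "F \<subseteq> W" "\<forall>y\<in>F. u y \<ge> 0"
      "(\<Sum>y\<in>F. u y) = 1" "z = (\<lambda>j. \<Sum>y\<in>F. u y * y j)" unfolding conv_def by blast
    have p: "\<forall>y\<in>F. (\<lambda>j. t j + y j) \<in> (\<lambda>x j. t j + x j) ` W" using F(3) by blast
    have c: "(\<lambda>j. \<Sum>y\<in>F. u y * (t j + y j)) \<in> conv ((\<lambda>x j. t j + x j) ` W)"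
      using conv_index[OF F(1) F(4) F(5) p] by simp
    have "x = (\<lambda>j. \<Sum>y\<in>F. u y * (t j + y j))"
    proof
      fix j
      have "(\<Sum>y\<in>F. u y * (t j + y j)) = (\<Sum>y\<in>F. u y * t j + u y * y j)"
        by (simp add: algebra_simps)
      also have "\<dots> = t j + z j"
        unfolding sum.distrib sum_distrib_right[symmetric] using F(5) F(6) by simp
      finally show "x j = (\<Sum>y\<in>F. u y * (t j + y j))" using z(2) by simp
    qed
    then show "x \<in> conv ((\<lambda>x j. t j + x j) ` W)" using c by simp
  qed
qed

lemma conv_msum_sub: "conv (msum I P) \<subseteq> msum I (\<lambda>i. conv (P i))"
proof
  fix x assume "x \<in> conv (msum I P)"
  then obtain F u where F: "finite F" "F \<noteq> {}" "F \<subseteq> msum I P" "\<forall>y\<in>F. u y \<ge> 0"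
    "(\<Sum>y\<in>F. u y) = 1" "x = (\<lambda>j. \<Sum>y\<in>F. u y * y j)" unfolding conv_def by blast
  have "\<forall>z\<in>F. \<exists>y. (\<forall>i\<in>I. y i \<in> P i) \<and> z = (\<lambda>j. \<Sum>i\<in>I. y i j)"
    using F(3) unfolding msum_def by blast
  then obtain Y where Y: "\<forall>z\<in>F. (\<forall>i\<in>I. Y z i \<in> P i) \<and> z = (\<lambda>j. \<Sum>i\<in>I. Y z i j)"
    by metis
  define y where "y i = (\<lambda>j. \<Sum>z\<in>F. u z * Y z i j)" for i
  have "\<forall>i\<in>I. y i \<in> conv (P i)"
  proof
    fix i assume "i \<in> I"
    then have "\<forall>z\<in>F. Y z i \<in> P i" using Y by blast
    then show "y i \<in> conv (P i)" unfolding y_def by (rule conv_index[OF F(1) F(4) F(5)])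
  qed
  moreover have "x = (\<lambda>j. \<Sum>i\<in>I. y i j)"
  proof
    fix j
    have "x j = (\<Sum>z\<in>F. u z * (\<Sum>i\<in>I. Y z i j))"
      using F(6) Y by (metis (no_types, lifting) sum.cong)
    also have "\<dots> = (\<Sum>i\<in>I. \<Sum>z\<in>F. u z * Y z i j)"
      unfolding sum_distrib_left by (rule sum.swap)
    finally show "x j = (\<Sum>i\<in>I. y i j)" unfolding y_def by simp
  qed
  ultimately show "x \<in> msum I (\<lambda>i. conv (P i))" unfolding msum_def by blast
qed

lemma msum_empty: "msum {} P = {(\<lambda>j. 0)}"
  unfolding msum_def by auto

lemma msum_insert:
  assumes "i \<notin> I" "a \<in> P i" "b \<in> msum I P" and fI: "finite I"
  shows "(\<lambda>j. a j + b j) \<in> msum (insert i I) P"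
proof -
  obtain y where y: "\<forall>i\<in>I. y i \<in> P i" "b = (\<lambda>j. \<Sum>i\<in>I. y i j)" using assms(3) unfolding msum_def by blast
  define y' where "y' = y(i := a)"
  have "\<forall>i'\<in>insert i I. y' i' \<in> P i'" using y(1) assms(2) unfolding y'_def by auto
  moreover have "(\<lambda>j. a j + b j) = (\<lambda>j. \<Sum>i'\<in>insert i I. y' i' j)"
  proof
    fix j
    have "(\<Sum>i'\<in>insert i I. y' i' j) = y' i j + (\<Sum>i'\<in>I. y' i' j)"
      using assms(1) fI by (simp add: sum.insert)
    also have "(\<Sum>i'\<in>I. y' i' j) = (\<Sum>i'\<in>I. y i' j)"
      unfolding y'_def using assms(1) by (intro sum.cong) auto
    finally show "a j + b j = (\<Sum>i'\<in>insert i I. y' i' j)" using y(2) unfolding y'_def by simp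
  qed
  ultimately show ?thesis unfolding msum_def by blast
qed

lemma msum_insert_D:
  assumes "finite I" "i \<notin> I" "x \<in> msum (insert i I) Q"
  shows "\<exists>a b. a \<in> Q i \<and> b \<in> msum I Q \<and> x = (\<lambda>j. a j + b j)"
proof -
  obtain y where y: "\<forall>i'\<in>insert i I. y i' \<in> Q i'" "x = (\<lambda>j. \<Sum>i'\<in>insert i I. y i' j)"
    using assms(3) unfolding msum_def by blast
  have "(\<lambda>j. \<Sum>i'\<in>I. y i' j) \<in> msum I Q" using y(1) unfolding msum_def by blast
  moreover have "x = (\<lambda>j. y i j + (\<Sum>i'\<in>I. y i' j))" using y(2) assms(1,2) by (simp add: sum.insert)
  ultimately show ?thesis using y(1) by blast
qed

lemma conv_pair:
  assumes a: "a \<in> conv A" and b: "b \<in> conv Bs"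
    and AB: "\<forall>x\<in>A. \<forall>y\<in>Bs. (\<lambda>j. x j + y j) \<in> C"
  shows "(\<lambda>j. a j + b j) \<in> conv C"
proof -
  obtain F1 u1 where F1: "finite F1" "F1 \<noteq> {}" "F1 \<subseteq> A" "\<forall>y\<in>F1. u1 y \<ge> 0"
    "(\<Sum>y\<in>F1. u1 y) = 1" "a = (\<lambda>j. \<Sum>y\<in>F1. u1 y * y j)" using a unfolding conv_def by blast
  obtain F2 u2 where F2: "finite F2" "F2 \<noteq> {}" "F2 \<subseteq> Bs" "\<forall>y\<in>F2. u2 y \<ge> 0"
    "(\<Sum>y\<in>F2. u2 y) = 1" "b = (\<lambda>j. \<Sum>y\<in>F2. u2 y * y j)" using b unfolding conv_def by blast
  define w where "w pq = u1 (fst pq) * u2 (snd pq)" for pq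
  define p where "p pq = (\<lambda>j. fst pq j + snd pq j)" for pq :: "(nat \<Rightarrow> real) \<times> (nat \<Rightarrow> real)"
  have K: "finite (F1 \<times> F2)" using F1(1) F2(1) by simp
  have w0: "\<forall>k\<in>F1 \<times> F2. w k \<ge> 0" unfolding w_def using F1(4) F2(4) by auto
  have cp: "(\<Sum>k\<in>F1 \<times> F2. f k) = (\<Sum>x\<in>F1. \<Sum>y\<in>F2. f (x, y))" for f :: "_ \<Rightarrow> real"
  proof -
    have "(\<Sum>x\<in>F1. \<Sum>y\<in>F2. f (x, y)) = (\<Sum>(x,y)\<in>F1 \<times> F2. f (x, y))" by (rule sum.cartesian_product)
    then show ?thesis by (simp add: case_prod_beta')
  qed
  have w1: "(\<Sum>k\<in>F1 \<times> F2. w k) = 1"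
  proof -
    have "(\<Sum>k\<in>F1 \<times> F2. w k) = (\<Sum>x\<in>F1. \<Sum>y\<in>F2. u1 x * u2 y)" unfolding cp w_def by simp
    also have "\<dots> = sum u1 F1 * sum u2 F2" by (simp add: sum_product)
    finally show ?thesis using F1(5) F2(5) by simp
  qed
  have pC: "\<forall>k\<in>F1 \<times> F2. p k \<in> C" unfolding p_def using AB F1(3) F2(3) by auto
  have c: "(\<lambda>j. \<Sum>k\<in>F1 \<times> F2. w k * p k j) \<in> conv C" by (rule conv_index[OF K w0 w1 pC])
  have "(\<lambda>j. a j + b j) = (\<lambda>j. \<Sum>k\<in>F1 \<times> F2. w k * p k j)"
  proof
    fix j
    have "(\<Sum>k\<in>F1 \<times> F2. w k * p k j) = (\<Sum>x\<in>F1. \<Sum>y\<in>F2. u1 x * u2 y * (x j + y j))"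
      unfolding cp w_def p_def by simp
    also have "\<dots> = (\<Sum>x\<in>F1. \<Sum>y\<in>F2. u2 y * (u1 x * x j) + u1 x * (u2 y * y j))"
      by (simp add: algebra_simps)
    also have "\<dots> = (\<Sum>x\<in>F1. u1 x * x j) + (\<Sum>y\<in>F2. u2 y * y j)"
      unfolding sum.distrib sum_distrib_left[symmetric] sum_distrib_right[symmetric] using F1(5) F2(5)
      by (simp add: sum.swap[of _ F1 F2])
    finally show "a j + b j = (\<Sum>k\<in>F1 \<times> F2. w k * p k j)" using F1(6) F2(6) by simp
  qed
  then show ?thesis using c by simp
qed

lemma msum_conv_sub: "finite I \<Longrightarrow> msum I (\<lambda>i. conv (P i)) \<subseteq> conv (msum I P)"
proof (induction I rule: finite_induct)
  case empty
  have "(\<lambda>j. \<Sum>k\<in>{()}. 1 * (\<lambda>j. 0::real) j) \<in> conv {(\<lambda>j. 0)}"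
    by (rule conv_index) auto
  then show ?case unfolding msum_empty by simp
next
  case (insert i I)
  show ?case
  proof
    fix x assume "x \<in> msum (insert i I) (\<lambda>i. conv (P i))"
    then obtain a b where ab: "a \<in> conv (P i)" "b \<in> msum I (\<lambda>i. conv (P i))" "x = (\<lambda>j. a j + b j)"
      using msum_insert_D[OF insert(1,2)] by blast
    have b': "b \<in> conv (msum I P)" using ab(2) insert.IH by blast
    have "(\<lambda>j. a j + b j) \<in> conv (msum (insert i I) P)"
      by (rule conv_pair[OF ab(1) b']) (use msum_insert[OF insert(2) _ _ insert(1)] in blast)
    then show "x \<in> conv (msum (insert i I) P)" using ab(3) by simp
  qed
qed

lemma conv_msum: "finite I \<Longrightarrow> conv (msum I P) = msum I (\<lambda>i. conv (P i))"
  using conv_msum_sub msum_conv_sub by blast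


context chainset
begin

definition Bh where
  "Bh ord k m = {b. pk b \<subseteq> V k \<and> mdeg b = m \<and> (\<exists>f\<in>J k. f \<noteq> 0 \<and> (\<exists>d. homog f d) \<and> mdvd (lm ord f) b)}"

lemma B_homog:
  assumes k: "k \<in> {1..l}" and mo: "mono_order (V k) ord"
  shows "B ord k m = Bh ord k m"
proof
  show "Bh ord k m \<subseteq> B ord k m" unfolding Bh_def B_def init_deg_def by blast
next
  show "B ord k m \<subseteq> Bh ord k m"
  proof
    fix b assume "b \<in> B ord k m"
    then obtain f where f: "f \<in> J k" "f \<noteq> 0" "mdvd (lm ord f) b" and b: "pk b \<subseteq> V k" "mdeg b = m"
      unfolding B_def init_deg_def by blast
    have fr: "\<forall>a\<in>fk f. pk a \<subseteq> V k" using f(1) unfolding J_def ring_in_def by blast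
    define \<alpha> where "\<alpha> = lm ord f"
    have al: "\<alpha> \<in> fk f" "\<forall>c\<in>fk f. ord c \<alpha>" using lm_props[OF mo f(2) fr] unfolding \<alpha>_def by auto
    define g where "g = hcomp f (mdeg \<alpha>)"
    have kg: "fk g = {a \<in> fk f. mdeg a = mdeg \<alpha>}" unfolding g_def hcomp_def keys_restr ..
    have pc: "proj_closed n (X k)" using closed k by blast
    have fI: "f \<in> ideal_of n (X k)" using f(1) unfolding J_def by blast
    have gI: "g \<in> ideal_of n (X k)" unfolding g_def by (rule ideal_hcomp[OF pc fI])
    have gR: "g \<in> ring_in (V k)" unfolding ring_in_def using kg fr by blast
    have ag: "\<alpha> \<in> fk g" using kg al by blast
    then have g0: "g \<noteq> 0" by auto
    have hg: "homog g (mdeg \<alpha>)" unfolding homog_def using kg by blast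
    have "lm ord g = \<alpha>" by (rule lm_eqI[OF mo]) (use kg fr ag al(2) in auto)
    then have "g \<in> J k \<and> g \<noteq> 0 \<and> (\<exists>d. homog g d) \<and> mdvd (lm ord g) b"
      using gI gR g0 hg f(3) unfolding J_def \<alpha>_def by auto
    then show "b \<in> Bh ord k m" unfolding Bh_def using b by blast
  qed
qed

lemma B_G:
  assumes MO: "\<forall>k\<in>{1..l}. mono_order (V k) (ords k)" and k: "k \<in> {1..l}"
  shows "B (G ords) k m = B (ords k) k m"
proof -
  have moG: "mono_order (V k) (G ords)" using mono_order_mono[OF G_mono_order[OF MO] V_sub[OF k]] .
  have eq: "lm (G ords) f = lm (ords k) f" if "f \<in> J k" "homog f d" for f d
  proof (rule lm_cong, intro ballI)
    fix a b assume ab: "a \<in> fk f" "b \<in> fk f"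
    have "\<forall>a\<in>fk f. pk a \<subseteq> V k" using that(1) unfolding J_def ring_in_def by blast
    moreover have "\<forall>a\<in>fk f. mdeg a = d" using that(2) unfolding homog_def by blast
    ultimately show "G ords a b = ords k a b" using G_agree[OF MO k] ab by auto
  qed
  have "Bh (G ords) k m = Bh (ords k) k m"
  proof
    show "Bh (G ords) k m \<subseteq> Bh (ords k) k m" unfolding Bh_def using eq by fastforce
    show "Bh (ords k) k m \<subseteq> Bh (G ords) k m" unfolding Bh_def using eq by fastforce
  qed
  then show ?thesis using B_homog[OF k moG] B_homog[OF k MO[rule_format, OF k]] by simp
qed

lemma main:
  assumes m: "m > 0"
  shows "state_polytope {0..n} I m =
     (\<lambda>x j. vecsum (T_deg n l ns m) j + x j) ` msum {1..l} (\<lambda>i. state_polytope (V i) (J i) m)"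
proof -
  define tr where "tr = (\<lambda>(x::nat\<Rightarrow>real) j. vecsum (T_deg n l ns m) j + x j)"
  define Vs where "Vs k = {vecsum (init_deg (V k) ord (J k) m) | ord. mono_order (V k) ord}" for k
  define S where "S = {vecsum (init_deg {0..n} ord I m) | ord. mono_order {0..n} ord}"
  have SP: "state_polytope {0..n} I m = conv S" unfolding state_polytope_def S_def ..
  have SPk: "(\<lambda>i. state_polytope (V i) (J i) m) = (\<lambda>i. conv (Vs i))" unfolding state_polytope_def Vs_def ..
  have "S = tr ` msum {1..l} Vs"
  proof
    show "S \<subseteq> tr ` msum {1..l} Vs"
    proof
      fix x assume "x \<in> S"
      then obtain ord where o: "mono_order {0..n} ord" "x = vecsum (init_deg {0..n} ord I m)"
        unfolding S_def by blast
      define y where "y k = vecsum (B ord k m)" for k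
      have "\<forall>k\<in>{1..l}. y k \<in> Vs k" unfolding y_def Vs_def B_def using mono_order_mono[OF o(1) V_sub] by blast
      then have "(\<lambda>j. \<Sum>k\<in>{1..l}. y k j) \<in> msum {1..l} Vs" unfolding msum_def by blast
      moreover have "x = tr (\<lambda>j. \<Sum>k\<in>{1..l}. y k j)" unfolding o(2) vecsum_split[OF o(1) m] y_def tr_def by simp
      ultimately show "x \<in> tr ` msum {1..l} Vs" by blast
    qed
  next
    show "tr ` msum {1..l} Vs \<subseteq> S"
    proof
      fix x assume "x \<in> tr ` msum {1..l} Vs"
      then obtain y where y: "\<forall>k\<in>{1..l}. y k \<in> Vs k" "x = tr (\<lambda>j. \<Sum>k\<in>{1..l}. y k j)"
        unfolding msum_def by blast
      have "\<forall>k\<in>{1..l}. \<exists>ord. mono_order (V k) ord \<and> y k = vecsum (init_deg (V k) ord (J k) m)"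
        using y(1) unfolding Vs_def by blast
      then obtain ords where ords: "\<forall>k\<in>{1..l}. mono_order (V k) (ords k) \<and> y k = vecsum (init_deg (V k) (ords k) (J k) m)"
        by (metis (no_types))
      have MO: "\<forall>k\<in>{1..l}. mono_order (V k) (ords k)" using ords by blast
      have moG: "mono_order {0..n} (G ords)" by (rule G_mono_order[OF MO])
      have yk: "vecsum (B (G ords) k m) = y k" if "k \<in> {1..l}" for k
        using B_G[OF MO that] ords that unfolding B_def by auto
      have "vecsum (init_deg {0..n} (G ords) I m) = tr (\<lambda>j. \<Sum>k\<in>{1..l}. vecsum (B (G ords) k m) j)"
        using vecsum_split[OF moG m] unfolding tr_def by simp
      also have "\<dots> = tr (\<lambda>j. \<Sum>k\<in>{1..l}. y k j)" using yk by simp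
      finally have "x = vecsum (init_deg {0..n} (G ords) I m)" using y(2) by simp
      then show "x \<in> S" using moG unfolding S_def by blast
    qed
  qed
  then have "state_polytope {0..n} I m = tr ` conv (msum {1..l} Vs)"
    unfolding SP tr_def by (simp add: conv_translate)
  also have "\<dots> = tr ` msum {1..l} (\<lambda>i. conv (Vs i))" using conv_msum[of "{1..l}" Vs] by simp
  finally show ?thesis unfolding SPk tr_def .
qed

end

theorem theorem1p3:
  fixes n l m :: nat and ns :: "nat \<Rightarrow> nat"
    and X :: "nat \<Rightarrow> (nat \<Rightarrow> 'a::{alg_closed_field, field_char_0}) set"
  assumes l_pos: "l \<ge> 1"
    and ns0: "ns 0 = 0" and ns_mono: "\<forall>i<l. ns i < ns (Suc i)" and nsl: "ns l = n"
    and closed: "\<forall>i\<in>{1..l}. proj_closed n (X i)"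
    and chain: "\<forall>i\<in>{1..l}. \<forall>j\<in>{1..l}. i \<noteq> j \<longrightarrow>
                  ((\<exists>p\<in>X i \<inter> X j. p \<noteq> (\<lambda>_. 0)) \<longleftrightarrow> (i = j + 1 \<or> j = i + 1))"
    and coords: "\<forall>i\<in>{1..l}. \<forall>p\<in>X i. \<forall>j. (j < ns (i - 1) \<or> ns i < j) \<longrightarrow> p j = 0"
    and m_pos: "m > 0"
    and reg_X: "reg_le {0..n} (ideal_of n (\<Union>i\<in>{1..l}. X i)) (int m)"
    and reg_Xi: "\<forall>i\<in>{1..l}. reg_le {0..n} (ideal_of n (X i)) (int m)"
    and reg_Ji: "\<forall>i\<in>{1..l}. reg_le {ns (i - 1)..ns i}
                    (ideal_of n (X i) \<inter> ring_in {ns (i - 1)..ns i}) (int m)"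
  shows "state_polytope {0..n} (ideal_of n (\<Union>i\<in>{1..l}. X i)) m =
         (\<lambda>x j. vecsum (T_deg n l ns m) j + x j) `
           msum {1..l} (\<lambda>i. state_polytope {ns (i - 1)..ns i}
                               (ideal_of n (X i) \<inter> ring_in {ns (i - 1)..ns i}) m)"
proof -
  interpret C: chainset n l ns X
    by (rule chainset.intro) (fact l_pos ns0 ns_mono nsl closed chain coords)+
  show ?thesis using C.main[OF m_pos] unfolding C.I_def C.J_def C.V_def .
qed


end
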